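(* For the deterministic episodic chain environment and the value-IDS agent described in the context, for every time $t$ the $\tau$-information ratio satisfies $\Gamma_{\tau,t}\le\tau/8$, and consequently $$\mathrm{Regret}(T)\le\frac{1}{2}\sqrt{\frac{\tau}{2}T}.$$
   Context: Fix an integer $\tau\ge2$. Actions $\mathcal{A}=\{0,1\}$; observations $\mathcal{O}=\{(0,0),(0,1),0,1,\ldots,2\tau-2\}$. The environment is parameterized by known numbers $r_0,\ldots,r_{\tau-2}\in[0,1)$ and an unknown $r_{\tau-1}\in\{0,1\}$ with prior $\mathbb{P}(r_{\tau-1}=0)=\mathbb{P}(r_{\tau-1}=1)=1/2$. Starting from $O_0=0$, observations evolve deterministically: if $O_t\in\{0,\ldots,\tau-2\}$ then $O_{t+1}=O_t+\tau$ if $A_t=0$ and $O_{t+1}=O_t+1$ if $A_t=1$; if $O_t\in\{(0,0),(0,1)\}$ then $O_{t+1}=\tau$ if $A_t=0$ and $O_{t+1}=1$ if $A_t=1$; if $O_t=\tau-1$ then $O_{t+1}=(0,r_{\tau-1})$; if $O_t\in\{\tau,\ldots,2\tau-3\}$ then $O_{t+1}=O_t+1$; if $O_t=2\tau-2$ then $O_{t+1}=0$. The state is $S_t=0$ if $O_t\in\{(0,0),(0,1)\}$ and $S_t=O_t$ otherwise; episodes have length $\tau$. Rewards: $R_{t+1}=r_{S_t}$ if $S_t\in\{0,\ldots,\tau-2\}$ and $A_t=0$, $R_{t+1}=r_{S_t}$ if $S_t=\tau-1$, and $R_{t+1}=0$ otherwise. $V_*(s)$ and $Q_*(s,a)$ denote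 the optimal value and action value of state $s$ (resp. state-action pair) for the remainder of the current episode, and $\pi_*$ an optimal policy (determined by the environment; it takes one of two possible forms according to $r_{\tau-1}$). The agent's epistemic state $P_t$ records the value of $r_{\tau-1}$ if it has been observed and is null otherwise; the agent state is $X_t=(S_t,P_t)$. Value-IDS: at each time $t$ the agent computes $\nu\in\Delta_{\mathcal{A}}$ (distributions on $\mathcal{A}$) minimizing $$\frac{\mathbb{E}[V_*(S_t)-Q_*(S_t,\tilde{A}_t)\,|\,X_t]^2}{\mathbb{I}(\pi_*(\cdot|S_t);\tilde{A}_t,Q_*(S_t,\tilde{A}_t)\,|\,X_t=X_t)}$$ (with $0/0=0$), where $\tilde{A}_t\sim\nu$ independently, and samples $A_t$ from $\nu$. $\mathbb{H}$ is entropy and $\mathbb{I}$ mutual information. The $\tau$-information ratio is $\Gamma_{\tau,t}=\mathbb{E}[V_*(S_t)-Q_*(S_t,A_t)]^2\big/\big((\mathbb{H}(\pi_*|P_t)-\mathbb{H}(\pi_*|P_{t+\tau}))/\tau\big)$, taken as $0$ when both numerator and denominator vanish. $\mathrm{Regret}(T)=\mathbb{E}[\sum_{t=0}^{T-1}(V_*(S_t)-Q_*(S_t,A_t))]$ under the agent. *)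

theory Defs
  imports "HOL-Probability.Probability"
begin

text \<open>Observations: Rev v stands for the observation (0,v) (v = r_{tau-1}), Pos n for the
  observation n.  Actions are the naturals 0 and 1 (distributions over actions are
  pmfs supported in {0,1}).  The unknown parameter r_{tau-1} is called rl.\<close>

datatype obs = Rev real | Pos nat

definition st :: "obs \<Rightarrow> nat" where
  "st ob = (case ob of Rev _ \<Rightarrow> 0 | Pos n \<Rightarrow> n)"

definition obs_next :: "nat \<Rightarrow> real \<Rightarrow> obs \<Rightarrow> nat \<Rightarrow> obs" where
  "obs_next \<tau> rl ob a =
     (case ob of
        Rev _ \<Rightarrow> (if a = 0 then Pos \<tau> else Pos 1)
      | Pos n \<Rightarrow>
          (if n \<le> \<tau> - 2 then (if a = 0 then Pos (n + \<tau>) else Pos (n + 1))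
           else if n = \<tau> - 1 then Rev rl
           else if n \<le> 2 * \<tau> - 3 then Pos (n + 1)
           else if n = 2 * \<tau> - 2 then Pos 0
           else undefined))"

text \<open>Reward R_{t+1} as a function of state S_t and action A_t.\<close>
definition rwd :: "nat \<Rightarrow> (nat \<Rightarrow> real) \<Rightarrow> real \<Rightarrow> nat \<Rightarrow> nat \<Rightarrow> real" where
  "rwd \<tau> r rl s a =
     (if s \<le> \<tau> - 2 \<and> a = 0 then r s
      else if s = \<tau> - 1 then rl
      else 0)"

fun Qf :: "nat \<Rightarrow> (nat \<Rightarrow> real) \<Rightarrow> real \<Rightarrow> nat \<Rightarrow> nat \<Rightarrow> nat \<Rightarrow> real" where
  "Qf \<tau> r rl 0 s a = 0"
| "Qf \<tau> r rl (Suc k) s a =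
     rwd \<tau> r rl s a
     + max (Qf \<tau> r rl k (st (obs_next \<tau> rl (Pos s) a)) 0)
           (Qf \<tau> r rl k (st (obs_next \<tau> rl (Pos s) a)) 1)"

definition steps_left :: "nat \<Rightarrow> nat \<Rightarrow> nat" where
  "steps_left \<tau> s = (if s \<le> \<tau> - 1 then \<tau> - s else 2 * \<tau> - 1 - s)"

definition Qstar :: "nat \<Rightarrow> (nat \<Rightarrow> real) \<Rightarrow> real \<Rightarrow> nat \<Rightarrow> nat \<Rightarrow> real" where
  "Qstar \<tau> r rl s a = Qf \<tau> r rl (steps_left \<tau> s) s a"

definition Vstar :: "nat \<Rightarrow> (nat \<Rightarrow> real) \<Rightarrow> real \<Rightarrow> nat \<Rightarrow> real" where
  "Vstar \<tau> r rl s = max (Qstar \<tau> r rl s 0) (Qstar \<tau> r rl s 1)"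

definition pistar :: "nat \<Rightarrow> (nat \<Rightarrow> real) \<Rightarrow> real \<Rightarrow> nat \<Rightarrow> nat" where
  "pistar \<tau> r rl s = (if Qstar \<tau> r rl s 1 \<le> Qstar \<tau> r rl s 0 then 0 else 1)"

definition entropy2 :: "'a pmf \<Rightarrow> real" where
  "entropy2 p = - (\<Sum>x\<in>set_pmf p. pmf p x * log 2 (pmf p x))"

definition mutinf2 :: "('a \<times> 'b) pmf \<Rightarrow> real" where
  "mutinf2 J = entropy2 (map_pmf fst J) + entropy2 (map_pmf snd J) - entropy2 J"

definition ratio_e :: "real \<Rightarrow> real \<Rightarrow> ereal" where
  "ratio_e n d = (if d = 0 then (if n = 0 then 0 else \<infinity>) else ereal (n / d))"

text \<open>An agent selection rule sel t x gives the action distribution at time t in agent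
  state x = (S_t, P_t); P_t = None means r_{tau-1} not yet observed.
  proc t is the joint law of (r_{tau-1}, O_t, P_t).\<close>

fun proc :: "nat \<Rightarrow> (nat \<Rightarrow> nat \<times> real option \<Rightarrow> nat pmf) \<Rightarrow> nat
               \<Rightarrow> (real \<times> obs \<times> real option) pmf" where
  "proc \<tau> sel 0 = map_pmf (\<lambda>v. (v, Pos 0, None)) (pmf_of_set {0, 1})"
| "proc \<tau> sel (Suc t) =
     bind_pmf (proc \<tau> sel t)
       (\<lambda>(v, ob, p). map_pmf
          (\<lambda>a. let ob' = obs_next \<tau> v ob a
               in (v, ob', (case ob' of Rev w \<Rightarrow> Some w | Pos _ \<Rightarrow> p)))
          (sel t (st ob, p)))"

definition agent_joint :: "nat \<Rightarrow> (nat \<Rightarrow> nat \<times> real option \<Rightarrow> nat pmf) \<Rightarrow> nat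
                           \<Rightarrow> (real \<times> (nat \<times> real option)) pmf" where
  "agent_joint \<tau> sel t = map_pmf (\<lambda>(v, ob, p). (v, (st ob, p))) (proc \<tau> sel t)"

definition posterior :: "nat \<Rightarrow> (nat \<Rightarrow> nat \<times> real option \<Rightarrow> nat pmf) \<Rightarrow> nat
                         \<Rightarrow> nat \<times> real option \<Rightarrow> real pmf" where
  "posterior \<tau> sel t x = map_pmf fst (cond_pmf (agent_joint \<tau> sel t) {y. snd y = x})"

definition ids_ratio :: "nat \<Rightarrow> (nat \<Rightarrow> real) \<Rightarrow> real pmf \<Rightarrow> nat \<Rightarrow> nat pmf \<Rightarrow> ereal" where
  "ids_ratio \<tau> r \<mu> s \<nu> =
     ratio_e
       ((measure_pmf.expectation (pair_pmf \<mu> \<nu>)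
           (\<lambda>(v, a). Vstar \<tau> r v s - Qstar \<tau> r v s a))\<^sup>2)
       (mutinf2 (bind_pmf \<mu> (\<lambda>v. map_pmf
           (\<lambda>a. (pistar \<tau> r v s, (a, Qstar \<tau> r v s a))) \<nu>)))"

definition action_dist :: "nat pmf \<Rightarrow> bool" where
  "action_dist \<nu> \<longleftrightarrow> set_pmf \<nu> \<subseteq> {0, 1}"

definition is_value_ids :: "nat \<Rightarrow> (nat \<Rightarrow> real) \<Rightarrow> (nat \<Rightarrow> nat \<times> real option \<Rightarrow> nat pmf) \<Rightarrow> bool" where
  "is_value_ids \<tau> r sel \<longleftrightarrow>
     (\<forall>t x. x \<in> snd ` set_pmf (agent_joint \<tau> sel t) \<longrightarrow>
        action_dist (sel t x) \<and>
        (\<forall>\<nu>. action_dist \<nu> \<longrightarrow>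
           ids_ratio \<tau> r (posterior \<tau> sel t x) (fst x) (sel t x)
             \<le> ids_ratio \<tau> r (posterior \<tau> sel t x) (fst x) \<nu>))"

definition exp_regret :: "nat \<Rightarrow> (nat \<Rightarrow> real) \<Rightarrow> (nat \<Rightarrow> nat \<times> real option \<Rightarrow> nat pmf) \<Rightarrow> nat \<Rightarrow> real" where
  "exp_regret \<tau> r sel t =
     measure_pmf.expectation
       (bind_pmf (proc \<tau> sel t) (\<lambda>(v, ob, p). map_pmf (\<lambda>a. (v, st ob, a)) (sel t (st ob, p))))
       (\<lambda>(v, s, a). Vstar \<tau> r v s - Qstar \<tau> r v s a)"

definition regret :: "nat \<Rightarrow> (nat \<Rightarrow> real) \<Rightarrow> (nat \<Rightarrow> nat \<times> real option \<Rightarrow> nat pmf) \<Rightarrow> nat \<Rightarrow> real" where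
  "regret \<tau> r sel T = (\<Sum>t<T. exp_regret \<tau> r sel t)"

text \<open>Conditional entropy H(pi_* | P_t); pi_* is the whole (random) optimal policy.\<close>
definition cond_ent_pistar :: "nat \<Rightarrow> (nat \<Rightarrow> real) \<Rightarrow> (nat \<Rightarrow> nat \<times> real option \<Rightarrow> nat pmf) \<Rightarrow> nat \<Rightarrow> real" where
  "cond_ent_pistar \<tau> r sel t =
     entropy2 (map_pmf (\<lambda>(v, ob, p). (pistar \<tau> r v, p)) (proc \<tau> sel t))
     - entropy2 (map_pmf (\<lambda>(v, ob, p). p) (proc \<tau> sel t))"

definition Gamma_tau :: "nat \<Rightarrow> (nat \<Rightarrow> real) \<Rightarrow> (nat \<Rightarrow> nat \<times> real option \<Rightarrow> nat pmf) \<Rightarrow> nat \<Rightarrow> ereal" where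
  "Gamma_tau \<tau> r sel t =
     ratio_e ((exp_regret \<tau> r sel t)\<^sup>2)
             ((cond_ent_pistar \<tau> r sel t - cond_ent_pistar \<tau> r sel (t + \<tau>)) / real \<tau>)"

end

theory Submission
  imports Defs
begin


lemma Qf_bottom: "\<tau> \<ge> 2 \<Longrightarrow> \<tau> \<le> s \<Longrightarrow> k + s \<le> 2*\<tau> - 1 \<Longrightarrow> Qf \<tau> r v k s a = 0"
proof (induction k arbitrary: s a)
  case 0 then show ?case by simp
next
  case (Suc k)
  have rw: "rwd \<tau> r v s a = 0" using Suc.prems by (auto simp: rwd_def)
  show ?case
  proof (cases "s \<le> 2*\<tau> - 3")
    case True
    then have "obs_next \<tau> v (Pos s) b = Pos (s+1)" for b using Suc.prems by (auto simp: obs_next_def)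
    then show ?thesis using Suc.prems Suc.IH[of "s+1"] rw by (simp add: st_def)
  next
    case False
    then have "k = 0" using Suc.prems by linarith
    then show ?thesis using rw by simp
  qed
qed

lemma Qf_late_indep: "\<tau> \<ge> 2 \<Longrightarrow> \<tau> - 1 \<le> s \<Longrightarrow> Qf \<tau> r v k s a = Qf \<tau> r v k s 0"
proof (cases k)
  case 0 then show ?thesis by simp
next
  case (Suc k')
  assume a: "\<tau> \<ge> 2" "\<tau> - 1 \<le> s"
  have "rwd \<tau> r v s a = rwd \<tau> r v s 0" using a by (auto simp: rwd_def)
  moreover have "obs_next \<tau> v (Pos s) a = obs_next \<tau> v (Pos s) 0" using a by (auto simp: obs_next_def)
  ultimately show ?thesis using Suc by simp
qed

lemma Qstar_late: "\<tau> \<ge> 2 \<Longrightarrow> \<tau> - 1 \<le> s \<Longrightarrow> Qstar \<tau> r v s a = Vstar \<tau> r v s"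
  unfolding Vstar_def Qstar_def using Qf_late_indep[of \<tau> s r v _ a] Qf_late_indep[of \<tau> s r v _ 1] by simp

lemma Qstar_top0: "\<tau> \<ge> 2 \<Longrightarrow> s \<le> \<tau> - 2 \<Longrightarrow> Qstar \<tau> r v s 0 = r s"
proof -
  assume a: "\<tau> \<ge> 2" "s \<le> \<tau> - 2"
  have sl: "steps_left \<tau> s = Suc (\<tau> - s - 1)" using a by (auto simp: steps_left_def)
  have on: "obs_next \<tau> v (Pos s) 0 = Pos (s + \<tau>)" using a by (auto simp: obs_next_def)
  have "Qf \<tau> r v (\<tau> - s - 1) (s + \<tau>) b = 0" for b using a by (intro Qf_bottom) auto
  then show ?thesis using a unfolding Qstar_def sl by (simp add: on st_def rwd_def)
qed

lemma Qstar_top1: "\<tau> \<ge> 2 \<Longrightarrow> s \<le> \<tau> - 2 \<Longrightarrow> Qstar \<tau> r v s 1 = Vstar \<tau> r v (s+1)"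
proof -
  assume a: "\<tau> \<ge> 2" "s \<le> \<tau> - 2"
  have sl: "steps_left \<tau> s = Suc (\<tau> - s - 1)" using a by (auto simp: steps_left_def)
  have sl2: "steps_left \<tau> (s+1) = \<tau> - s - 1" using a by (auto simp: steps_left_def)
  have on: "obs_next \<tau> v (Pos s) 1 = Pos (s + 1)" using a by (auto simp: obs_next_def)
  have rw: "rwd \<tau> r v s 1 = 0" using a by (auto simp: rwd_def)
  show ?thesis using a unfolding Vstar_def Qstar_def sl sl2 by (simp add: on[simplified] st_def rw[simplified])
qed

lemma Qstar_last: "\<tau> \<ge> 2 \<Longrightarrow> Qstar \<tau> r v (\<tau> - 1) a = v"
proof -
  assume a: "\<tau> \<ge> 2"
  have sl: "steps_left \<tau> (\<tau> - 1) = Suc 0" using a by (auto simp: steps_left_def)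
  have n: "\<not> (\<tau> - 1 \<le> \<tau> - 2)" using a by arith
  show ?thesis unfolding Qstar_def sl using n by (simp add: rwd_def)
qed

lemma Vstar_last: "\<tau> \<ge> 2 \<Longrightarrow> Vstar \<tau> r v (\<tau> - 1) = v"
  using Qstar_last[of \<tau> r v 0] Qstar_last[of \<tau> r v 1] by (simp add: Vstar_def)

definition Mx :: "nat \<Rightarrow> (nat \<Rightarrow> real) \<Rightarrow> nat \<Rightarrow> real" where
  "Mx \<tau> r s = Max (insert 0 (r ` {s..<\<tau>-1}))"

lemma Mx_last: "s \<ge> \<tau> - 1 \<Longrightarrow> Mx \<tau> r s = 0"
  by (simp add: Mx_def)

lemma Mx_step: "s < \<tau> - 1 \<Longrightarrow> Mx \<tau> r s = max (r s) (Mx \<tau> r (s+1))"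
proof -
  assume "s < \<tau> - 1"
  then have "{s..<\<tau>-1} = insert s {s+1..<\<tau>-1}" by auto
  then have "insert 0 (r ` {s..<\<tau>-1}) = insert (r s) (insert 0 (r ` {s+1..<\<tau>-1}))" by auto
  then show ?thesis unfolding Mx_def by (simp add: Max_insert del: Max_insert2)
qed

lemma Vstar_top:
  assumes "\<tau> \<ge> 2" and r: "\<forall>k < \<tau> - 1. 0 \<le> r k \<and> r k < 1"
  shows "s \<le> \<tau> - 1 \<Longrightarrow> Vstar \<tau> r 1 s = 1 \<and> Vstar \<tau> r 0 s = Mx \<tau> r s"
proof (induction "\<tau> - 1 - s" arbitrary: s)
  case 0
  then have "s = \<tau> - 1" by simp
  then show ?case using assms Vstar_last[of \<tau> r 1] Vstar_last[of \<tau> r 0] Mx_last[of \<tau> s r] by simp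
next
  case (Suc d)
  then have s: "s \<le> \<tau> - 2" "s < \<tau> - 1" by auto
  have IH: "Vstar \<tau> r 1 (s+1) = 1 \<and> Vstar \<tau> r 0 (s+1) = Mx \<tau> r (s+1)"
    using Suc by (intro Suc.hyps) auto
  have "r s < 1" "0 \<le> r s" using r s by auto
  then show ?case unfolding Vstar_def using s assms IH Qstar_top1[of \<tau> s r 1] Qstar_top1[of \<tau> s r 0]
    by (simp add: Qstar_top0 Mx_step max.commute Vstar_def)
qed

lemma Mx_bounds:
  assumes r: "\<forall>k < \<tau> - 1. 0 \<le> r k \<and> r k < 1"
  shows "0 \<le> Mx \<tau> r s \<and> Mx \<tau> r s < 1"
proof -
  have f: "finite (insert 0 (r ` {s..<\<tau>-1}))" by simp
  have "Mx \<tau> r s \<in> insert 0 (r ` {s..<\<tau>-1})" unfolding Mx_def by (rule Max_in) auto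
  then have "Mx \<tau> r s < 1" using r by auto
  moreover have "0 \<le> Mx \<tau> r s" unfolding Mx_def using f by (simp add: Max_ge)
  ultimately show ?thesis by simp
qed


definition phi :: "real \<Rightarrow> real" where
  "phi x = (if x \<le> 2/3 then 1 else (1-x)/(2*x-1))"
definition pst :: "real \<Rightarrow> real \<Rightarrow> real" where
  "pst x y = (if 2*(1-x) < x - y then (1-x)/(2*x-y-1) else 1)"
definition regq :: "real \<Rightarrow> real \<Rightarrow> real \<Rightarrow> real" where
  "regq x y q = ((1-q)*(1-x) + q*(x-y))/2"

lemma pst_bounds: "0 \<le> y \<Longrightarrow> y \<le> x \<Longrightarrow> x < 1 \<Longrightarrow> 0 < pst x y \<and> pst x y \<le> 1"
  unfolding pst_def by (auto simp: field_simps)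

lemma phi_pos: "x < 1 \<Longrightarrow> 0 < phi x"
  unfolding phi_def by (auto simp: field_simps)

lemma pst_unique:
  assumes "0 \<le> y" "y \<le> x" "x < 1" "0 < q" "q \<le> 1"
    and le: "(regq x y q)^2 / q \<le> (regq x y (pst x y))^2 / pst x y"
  shows "q = pst x y"
proof (cases "2*(1-x) < x - y")
  case True
  define a where "a = 1 - x"
  define c where "c = 2*x - y - 1"
  have a0: "a > 0" using assms a_def by auto
  have ca: "c > a" using True a_def c_def by auto
  have p: "pst x y = a / c" using True unfolding pst_def a_def c_def by simp
  have xy: "x - y = c + a" "1 - x = a" using a_def c_def by auto
  have rp: "regq x y (a/c) = a" unfolding regq_def xy using ca a0 by (simp add: field_simps)
  have rq: "regq x y q = (a + q*c)/2" unfolding regq_def a_def c_def by (simp add: field_simps)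
  have "(regq x y (pst x y))^2 / pst x y = a * c" unfolding p rp using a0 ca by (simp add: power2_eq_square)
  then have "(a + q*c)^2 / (4*q) \<le> a * c" using le rq by (simp add: power_divide)
  then have "(a + q*c)^2 \<le> 4*q*(a*c)" using assms(4) by (simp add: field_simps)
  then have "(a - q*c)^2 \<le> 0" by (simp add: power2_eq_square algebra_simps)
  then have "a = q * c" by simp
  then show ?thesis using p ca a0 by (simp add: field_simps)
next
  case False
  define a where "a = 1 - x"
  define c where "c = 2*x - y - 1"
  have a0: "a > 0" using assms a_def by auto
  have ca: "c \<le> a" "-a \<le> c" using False assms a_def c_def by auto
  have p: "pst x y = 1" using False unfolding pst_def by simp
  have rq: "regq x y q = (a + q*c)/2" unfolding regq_def a_def c_def by (simp add: field_simps)
  have r1: "regq x y 1 = (a + c)/2" unfolding regq_def a_def c_def by (simp add: field_simps)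
  have "(a + q*c)^2 / (4*q) \<le> (a+c)^2/4" using le rq r1 p by (simp add: power_divide)
  then have "(a + q*c)^2 \<le> q*(a+c)^2" using assms(4) by (simp add: field_simps)
  then have h: "(1-q)*(a^2 - q*c^2) \<le> 0" by (simp add: power2_eq_square algebra_simps)
  show ?thesis
  proof (rule ccontr)
    assume "q \<noteq> pst x y"
    then have q1: "q < 1" using p assms by simp
    have "c^2 \<le> a^2" using ca by (simp add: abs_le_square_iff[symmetric] abs_le_iff) 
    then have "q*c^2 < a^2"
    proof (cases "c^2 = 0")
      case True then show ?thesis using a0 by simp
    next
      case False
      then have "c^2 > 0" by simp
      then have "q*c^2 < 1*c^2" using q1 by (intro mult_strict_right_mono) auto
      then show ?thesis using \<open>c^2 \<le> a^2\<close> by simp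
    qed
    then have "(1-q)*(a^2 - q*c^2) > 0" using q1 by simp
    then show False using h by simp
  qed
qed

lemma pst_A:
  assumes y0: "0 \<le> y" and yx: "y \<le> x" and x1: "x < 1"
  shows "phi x \<le> pst x y * phi y"
proof (cases "x \<le> 2/3")
  case True
  then show ?thesis using assms unfolding phi_def pst_def by auto
next
  case xg: False
  have d1: "2*x - 1 > 0" using xg by simp
  show ?thesis
  proof (cases "2*(1-x) < x - y")
    case False
    then have p: "pst x y = 1" unfolding pst_def by simp
    show ?thesis
    proof (cases "y \<le> 2/3")
      case True
      then show ?thesis using p xg d1 unfolding phi_def by (simp add: field_simps)
    next
      case False
      then have d2: "2*y - 1 > 0" by simp
      have "(1-x)*(2*y-1) \<le> (1-y)*(2*x-1)" using yx by (simp add: algebra_simps)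
      then have "(1-x)/(2*x-1) \<le> (1-y)/(2*y-1)" using d1 d2 by (simp add: divide_simps)
      then show ?thesis using p xg False unfolding phi_def by simp
    qed
  next
    case True
    have d3: "2*x - y - 1 > 0" using True x1 by simp
    have p: "pst x y = (1-x)/(2*x-y-1)" using True unfolding pst_def by simp
    show ?thesis
    proof (cases "y \<le> 2/3")
      case yl: True
      have "(1-x)/(2*x-1) \<le> (1-x)/(2*x-y-1)"
        using d1 d3 y0 x1 by (intro divide_left_mono) auto
      then show ?thesis using p xg yl unfolding phi_def by simp
    next
      case False
      then have d2: "2*y - 1 > 0" by simp
      have key: "2*x - 1 - 3*x*y + y + y^2 = (1-y)^2 + (1-x)*(3*y-2)"
        by (simp add: power2_eq_square algebra_simps)
      have "(1-x)*(3*y-2) \<ge> 0" using x1 False by simp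
      then have "2*x - 1 - 3*x*y + y + y^2 \<ge> 0" using key by simp
      then have "(2*x-y-1)*(2*y-1) \<le> (1-y)*(2*x-1)" by (simp add: power2_eq_square algebra_simps)
      then have "(1-x)*((2*x-y-1)*(2*y-1)) \<le> (1-x)*((1-y)*(2*x-1))"
        using x1 by (intro mult_left_mono) auto
      then have "(1-x)/(2*x-1) \<le> (1-x)/(2*x-y-1) * ((1-y)/(2*y-1))"
        using d1 d2 d3 by (simp add: divide_simps mult.commute mult.left_commute)
      then show ?thesis using p xg False unfolding phi_def by simp
    qed
  qed
qed

lemma pst_B:
  assumes y0: "0 \<le> y" and yx: "y \<le> x" and x1: "x < 1"
  shows "(regq x y (pst x y))^2 \<le> pst x y * phi y / 8"
proof (cases "2*(1-x) < x - y")
  case False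
  then have p: "pst x y = 1" unfolding pst_def by simp
  have r: "regq x y 1 = (x-y)/2" unfolding regq_def by simp
  have b: "x - y \<le> 2*(1-y)/3" using False by simp
  have b0: "0 \<le> x - y" using yx by simp
  have sq: "(x-y)^2 \<le> (2*(1-y)/3)^2" using b b0 by (intro power_mono) auto
  show ?thesis
  proof (cases "y \<le> 2/3")
    case True
    have "(2*(1-y)/3)^2 \<le> 1/2"
    proof -
      have "2*(1-y)/3 \<le> 2/3" "0 \<le> 2*(1-y)/3" using y0 True x1 yx by auto
      then have "(2*(1-y)/3)^2 \<le> (2/3)^2" by (intro power_mono) auto
      then show ?thesis by (simp add: power2_eq_square)
    qed
    then have "(x-y)^2 \<le> 1/2" using sq by linarith
    then show ?thesis unfolding p r using True unfolding phi_def by (simp add: power_divide)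
  next
    case yg: False
    then have d2: "2*y - 1 > 0" by simp
    have m: "(1-y)*(2*y-1) \<le> 1/8"
    proof -
      have "1/8 - (1-y)*(2*y-1) = 2*(y - 3/4)^2" by (simp add: power2_eq_square algebra_simps)
      moreover have "0 \<le> 2*(y - 3/4)^2" by simp
      ultimately show ?thesis by linarith
    qed
    have "8*(1-y)^2/9 * (2*y-1) \<le> (1-y)"
    proof -
      have "8*(1-y)^2/9 * (2*y-1) = (8/9)*(1-y)*((1-y)*(2*y-1))" by (simp add: power2_eq_square)
      also have "\<dots> \<le> (8/9)*(1-y)*(1/8)" using m yx x1 by (intro mult_left_mono) auto
      also have "\<dots> \<le> 1 - y" using yx x1 by simp
      finally show ?thesis .
    qed
    then have "8*(1-y)^2/9 \<le> (1-y)/(2*y-1)" using d2 by (simp add: field_simps)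
    moreover have "(2*(1-y)/3)^2 = 4*(1-y)^2/9" by (simp add: power2_eq_square algebra_simps)
    then have "2*(x-y)^2 \<le> 8*(1-y)^2/9" using sq by linarith
    ultimately have "2*(x-y)^2 \<le> (1-y)/(2*y-1)" by linarith
    moreover have "((x-y)/2)^2 = 2*(x-y)^2/8" by (simp add: power_divide)
    moreover have "2*(x-y)^2/8 \<le> ((1-y)/(2*y-1)) / 8" using calculation(1) by (intro divide_right_mono) auto
    ultimately have "((x-y)/2)^2 \<le> 1 * ((1-y)/(2*y-1)) / 8" by linarith
    then show ?thesis unfolding p r using yg unfolding phi_def by simp
  qed
next
  case True
  define a where "a = 1 - x"
  define c where "c = 2*x - y - 1"
  have a0: "a > 0" using x1 a_def by auto
  have ca: "c > a" using True a_def c_def by auto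
  have p: "pst x y = a / c" using True unfolding pst_def a_def c_def by simp
  have xy: "x - y = c + a" "1 - x = a" using a_def c_def by auto
  have rp: "regq x y (a/c) = a" unfolding regq_def xy using ca a0 by (simp add: field_simps)
  have amgm: "8*(a*c) \<le> (1-y)^2"
  proof -
    have "(1-y)^2 - 8*(a*c) = (2*a - c)^2" unfolding a_def c_def by (simp add: power2_eq_square algebra_simps)
    moreover have "0 \<le> (2*a - c)^2" by simp
    ultimately show ?thesis by linarith
  qed
  have ph: "(1-y)^2 \<le> phi y"
  proof (cases "y \<le> 2/3")
    case True
    have "(1-y)^2 \<le> 1^2" using y0 yx x1 by (intro power_mono) auto
    then show ?thesis using True unfolding phi_def by simp
  next
    case False
    then have d2: "2*y - 1 > 0" by simp
    have "1/8 - (1-y)*(2*y-1) = 2*(y - 3/4)^2" by (simp add: power2_eq_square algebra_simps)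
    moreover have "0 \<le> 2*(y - 3/4)^2" by simp
    ultimately have "(1-y)*(2*y-1) \<le> 1" by linarith
    then have "(1-y)*((1-y)*(2*y-1)) \<le> (1-y)*1" using yx x1 by (intro mult_left_mono) auto
    then have "(1-y)^2 \<le> (1-y)/(2*y-1)" using d2 by (simp add: field_simps power2_eq_square)
    then show ?thesis using False unfolding phi_def by simp
  qed
  have "8*(a*c) \<le> phi y" using amgm ph by simp
  then have "a^2 \<le> a/c * phi y / 8" using a0 ca by (simp add: field_simps power2_eq_square)
  then show ?thesis unfolding p rp .
qed


lemma entropy2_sum:
  assumes "finite A" "set_pmf p \<subseteq> A"
  shows "entropy2 p = - (\<Sum>x\<in>A. pmf p x * log 2 (pmf p x))"
proof -
  have "(\<Sum>x\<in>set_pmf p. pmf p x * log 2 (pmf p x)) = (\<Sum>x\<in>A. pmf p x * log 2 (pmf p x))"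
    using assms by (intro sum.mono_neutral_left) (auto simp: set_pmf_eq)
  then show ?thesis unfolding entropy2_def by simp
qed

lemma entropy2_map_inj:
  assumes "inj_on f (set_pmf p)"
  shows "entropy2 (map_pmf f p) = entropy2 p"
proof -
  have "(\<Sum>x\<in>f ` set_pmf p. pmf (map_pmf f p) x * log 2 (pmf (map_pmf f p) x))
      = (\<Sum>x\<in>set_pmf p. pmf (map_pmf f p) (f x) * log 2 (pmf (map_pmf f p) (f x)))"
    using sum.reindex[OF assms] by (simp add: comp_def)
  also have "\<dots> = (\<Sum>x\<in>set_pmf p. pmf p x * log 2 (pmf p x))"
    using assms by (intro sum.cong) (auto simp: pmf_map_inj)
  finally show ?thesis unfolding entropy2_def by simp
qed

lemma entropy2_return: "entropy2 (return_pmf c) = 0"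
  unfolding entropy2_def by simp

lemma mutinf_const: "mutinf2 (map_pmf (\<lambda>z. (c, z)) M) = 0"
proof -
  have "map_pmf fst (map_pmf (\<lambda>z. (c, z)) M) = return_pmf c" by (simp add: map_pmf_comp)
  moreover have "map_pmf snd (map_pmf (\<lambda>z. (c, z)) M) = M" by (simp add: map_pmf_comp)
  moreover have "entropy2 (map_pmf (\<lambda>z. (c, z)) M) = entropy2 M"
    by (rule entropy2_map_inj) (auto simp: inj_on_def)
  ultimately show ?thesis unfolding mutinf2_def by (simp add: entropy2_return)
qed

lemma exp_sum:
  assumes "finite A" "set_pmf p \<subseteq> A"
  shows "measure_pmf.expectation p f = (\<Sum>x\<in>A. f x * pmf p x)"
  using assms by (intro integral_measure_pmf_real) auto

lemma exp_bind_fin: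
  assumes fin: "finite (set_pmf p)" and fin2: "\<And>x. x \<in> set_pmf p \<Longrightarrow> finite (set_pmf (g x))"
  shows "measure_pmf.expectation (bind_pmf p g) (f::_ \<Rightarrow> real)
       = measure_pmf.expectation p (\<lambda>x. measure_pmf.expectation (g x) f)"
proof -
  define S where "S = set_pmf p"
  define B where "B = (\<Union>x\<in>S. set_pmf (g x))"
  have fS: "finite S" and fB: "finite B" using fin fin2 unfolding S_def B_def by auto
  have "measure_pmf.expectation (bind_pmf p g) f = (\<Sum>y\<in>B. f y * pmf (bind_pmf p g) y)"
    using fB by (intro exp_sum) (auto simp: B_def S_def)
  also have "\<dots> = (\<Sum>y\<in>B. f y * (\<Sum>x\<in>S. pmf (g x) y * pmf p x))"
    unfolding pmf_bind using fS by (intro sum.cong refl arg_cong2[where f="(*)"] exp_sum) (auto simp: S_def)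
  also have "\<dots> = (\<Sum>x\<in>S. (\<Sum>y\<in>B. f y * pmf (g x) y) * pmf p x)"
    by (simp add: sum_distrib_left sum_distrib_right mult.assoc mult.commute mult.left_commute sum.swap[of _ B])
  also have "\<dots> = (\<Sum>x\<in>S. measure_pmf.expectation (g x) f * pmf p x)"
    using fB by (intro sum.cong refl arg_cong2[where f="(*)"] exp_sum[symmetric]) (auto simp: B_def)
  also have "\<dots> = measure_pmf.expectation p (\<lambda>x. measure_pmf.expectation (g x) f)"
    using fS by (intro exp_sum[symmetric]) (auto simp: S_def)
  finally show ?thesis .
qed

abbreviation U :: "real pmf" where "U \<equiv> pmf_of_set {0, 1}"

lemma pmf_bindU: "pmf (bind_pmf U f) z = (pmf (f 0) z + pmf (f 1) z) / 2"
  by (subst pmf_bind_pmf_of_set) auto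

lemma expU: "measure_pmf.expectation U (f::real\<Rightarrow>real) = (f 0 + f 1) / 2"
  by (subst integral_pmf_of_set) auto

lemma act_pmf0: "action_dist \<nu> \<Longrightarrow> pmf \<nu> 0 = 1 - pmf \<nu> 1"
  using sum_pmf_eq_1[of "{0,1::nat}" \<nu>] unfolding action_dist_def by simp

lemma exp_act: "action_dist \<nu> \<Longrightarrow> measure_pmf.expectation \<nu> f = (1 - pmf \<nu> 1) * f 0 + pmf \<nu> 1 * f 1"
  by (subst exp_sum[of "{0,1}"]) (auto simp: action_dist_def act_pmf0)

lemma act_fin: "action_dist \<nu> \<Longrightarrow> finite (set_pmf \<nu>)"
  unfolding action_dist_def using finite_subset by blast

lemma pmf_map_act:
  assumes "action_dist \<nu>"
  shows "pmf (map_pmf g \<nu>) z = (if g 0 = z then 1 - pmf \<nu> 1 else 0) + (if g 1 = z then pmf \<nu> 1 else 0)"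
proof -
  have "pmf (map_pmf g \<nu>) z = measure_pmf.expectation \<nu> (\<lambda>a. indicator {z} (g a))"
  proof -
    have "(\<lambda>a. indicator {z} (g a) :: real) = indicator (g -` {z})" by (auto simp: indicator_def)
    then show ?thesis by (simp add: pmf_map)
  qed
  then show ?thesis using exp_act[OF assms] by (simp add: indicator_def)
qed

lemma exp_pairU:
  assumes "action_dist \<nu>"
  shows "measure_pmf.expectation (pair_pmf U \<nu>) h =
    ((1 - pmf \<nu> 1) * h (0,0) + pmf \<nu> 1 * h (0,1) + (1 - pmf \<nu> 1) * h (1,0) + pmf \<nu> 1 * h (1,1)) / 2"
proof -
  have "set_pmf (pair_pmf U \<nu>) \<subseteq> {(0,0),(0,1),(1,0),(1,1)}"
    using assms by (auto simp: set_pair_pmf action_dist_def)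
  then have "measure_pmf.expectation (pair_pmf U \<nu>) h = (\<Sum>x\<in>{(0,0),(0,1),(1,0),(1,1)}. h x * pmf (pair_pmf U \<nu>) x)"
    by (intro exp_sum) auto
  then show ?thesis using act_pmf0[OF assms] by (simp add: pmf_pair field_simps)
qed

lemma xlog: "0 \<le> x \<Longrightarrow> x * log 2 (x/2) = x * log 2 x - (x::real)"
  by (cases "x = 0") (auto simp: log_divide right_diff_distrib)

lemma bern_act:
  assumes "0 \<le> p" "p \<le> 1"
  shows "action_dist (map_pmf (\<lambda>b. if b then 1 else 0) (bernoulli_pmf p))
       \<and> pmf (map_pmf (\<lambda>b. if b then 1 else 0) (bernoulli_pmf p)) (1::nat) = p"
proof
  show "action_dist (map_pmf (\<lambda>b. if b then 1 else 0) (bernoulli_pmf p))"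
    unfolding action_dist_def by auto
  have "pmf (map_pmf (\<lambda>b. if b then 1 else (0::nat)) (bernoulli_pmf p)) ((\<lambda>b. if b then 1 else 0) True) = pmf (bernoulli_pmf p) True"
    by (rule pmf_map_inj') (auto simp: inj_def split: if_splits)
  then show "pmf (map_pmf (\<lambda>b. if b then 1 else 0) (bernoulli_pmf p)) (1::nat) = p" using assms by simp
qed


lemma obs_next_Pos:
  "\<tau> \<ge> 2 \<Longrightarrow> n \<le> 2*\<tau>-2 \<Longrightarrow> (n = \<tau>-1 \<and> obs_next \<tau> v (Pos n) a = Rev v)
     \<or> (n \<noteq> \<tau>-1 \<and> (\<exists>m \<le> 2*\<tau>-2. obs_next \<tau> v (Pos n) a = Pos m))"
  unfolding obs_next_def by auto

lemma obs_next_Rev: "\<tau> \<ge> 2 \<Longrightarrow> \<exists>m \<le> 2*\<tau>-2. obs_next \<tau> v (Rev w) a = Pos m"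
  unfolding obs_next_def by auto

lemma obs_next_v: "n \<le> 2*\<tau>-2 \<Longrightarrow>
   obs_next \<tau> v (Pos n) a = (case obs_next \<tau> 0 (Pos n) a of Rev _ \<Rightarrow> Rev v | Pos m \<Rightarrow> Pos m)"
  unfolding obs_next_def by auto

locale envl =
  fixes \<tau> :: nat and r :: "nat \<Rightarrow> real" and sel :: "nat \<Rightarrow> nat \<times> real option \<Rightarrow> nat pmf"
  assumes tau: "\<tau> \<ge> 2" and rr: "\<forall>k < \<tau> - 1. 0 \<le> r k \<and> r k < 1" and ids: "is_value_ids \<tau> r sel"
begin

definition stepP :: "nat \<Rightarrow> real \<times> obs \<times> real option \<Rightarrow> (real \<times> obs \<times> real option) pmf" where
  "stepP t = (\<lambda>(v, ob, p). map_pmf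
          (\<lambda>a. let ob' = obs_next \<tau> v ob a
               in (v, ob', (case ob' of Rev w \<Rightarrow> Some w | Pos _ \<Rightarrow> p)))
          (sel t (st ob, p)))"

lemma proc_Suc': "proc \<tau> sel (Suc t) = bind_pmf (proc \<tau> sel t) (stepP t)"
  by (simp add: stepP_def)

primrec Kp :: "nat \<Rightarrow> real \<Rightarrow> (real \<times> obs \<times> real option) pmf" where
  "Kp 0 v = return_pmf (v, Pos 0, None)"
| "Kp (Suc t) v = bind_pmf (Kp t v) (stepP t)"

lemma proc_Kp: "proc \<tau> sel t = bind_pmf U (Kp t)"
proof (induction t)
  case 0 then show ?case by (simp add: map_pmf_def)
next
  case (Suc t) then show ?case by (simp only: proc_Suc' Kp.simps bind_assoc_pmf)
qed

definition stepW :: "nat \<Rightarrow> obs option \<Rightarrow> obs option pmf" where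
  "stepW t z = (case z of None \<Rightarrow> return_pmf None
      | Some ob \<Rightarrow> map_pmf (\<lambda>a. (case obs_next \<tau> 0 ob a of Rev w \<Rightarrow> None | Pos n \<Rightarrow> Some (Pos n))) (sel t (st ob, None)))"

primrec W :: "nat \<Rightarrow> obs option pmf" where
  "W 0 = return_pmf (Some (Pos 0))"
| "W (Suc t) = bind_pmf (W t) (stepW t)"

definition proj :: "real \<times> obs \<times> real option \<Rightarrow> obs option" where
  "proj x = (case x of (v, ob, p) \<Rightarrow> if p = None then Some ob else None)"

definition good :: "real \<Rightarrow> real \<times> obs \<times> real option \<Rightarrow> bool" where
  "good v x = (case x of (v', ob, p) \<Rightarrow> v' = v \<and> (p = None \<or> p = Some v) \<and>
       ((\<exists>n \<le> 2*\<tau>-2. ob = Pos n) \<or> (p = Some v \<and> ob = Rev v)))"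

lemma set_proc: "set_pmf (proc \<tau> sel t) = set_pmf (Kp t 0) \<union> set_pmf (Kp t 1)"
  by (auto simp: proc_Kp)

lemma reach_Kp:
  assumes "v \<in> {0,1}" "(v', ob, p) \<in> set_pmf (Kp t v)"
  shows "(st ob, p) \<in> snd ` set_pmf (agent_joint \<tau> sel t)"
proof -
  have "(v', ob, p) \<in> set_pmf (proc \<tau> sel t)" using assms set_proc by auto
  then show ?thesis unfolding agent_joint_def by force
qed

lemma ids_at: "x \<in> snd ` set_pmf (agent_joint \<tau> sel t) \<Longrightarrow> action_dist (sel t x) \<and>
        (\<forall>\<nu>. action_dist \<nu> \<longrightarrow>
           ids_ratio \<tau> r (posterior \<tau> sel t x) (fst x) (sel t x)
             \<le> ids_ratio \<tau> r (posterior \<tau> sel t x) (fst x) \<nu>)"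
  using ids unfolding is_value_ids_def by blast

lemma Kp_good: "v \<in> {0,1} \<Longrightarrow> x \<in> set_pmf (Kp t v) \<Longrightarrow> good v x"
proof (induction t arbitrary: x)
  case 0 then show ?case by (auto simp: good_def)
next
  case (Suc t)
  then obtain y where y: "y \<in> set_pmf (Kp t v)" "x \<in> set_pmf (stepP t y)" by auto
  obtain v' ob p where yy: "y = (v', ob, p)" by (cases y) auto
  have gy: "good v y" using Suc y by auto
  then have v': "v' = v" using yy by (simp add: good_def)
  from y(2) obtain a where x: "x = (v, obs_next \<tau> v ob a, (case obs_next \<tau> v ob a of Rev w \<Rightarrow> Some w | Pos _ \<Rightarrow> p))"
    unfolding stepP_def yy v' by (auto simp: Let_def)
  show ?case
  proof (cases ob)
    case (Rev w)
    then have "p = Some v" using gy yy by (auto simp: good_def)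
    then show ?thesis using obs_next_Rev[OF tau, of v w a] x Rev by (auto simp: good_def)
  next
    case (Pos n)
    then have n: "n \<le> 2*\<tau>-2" "p = None \<or> p = Some v" using gy yy by (auto simp: good_def)
    show ?thesis using obs_next_Pos[OF tau n(1), of v a] x Pos n(2) by (auto simp: good_def)
  qed
qed

lemma W_rel: "v \<in> {0,1} \<Longrightarrow> map_pmf proj (Kp t v) = W t"
proof (induction t)
  case 0 then show ?case by (simp add: proj_def)
next
  case (Suc t)
  have "map_pmf proj (Kp (Suc t) v) = bind_pmf (Kp t v) (\<lambda>x. map_pmf proj (stepP t x))"
    by (simp add: map_bind_pmf)
  also have "\<dots> = bind_pmf (Kp t v) (\<lambda>x. stepW t (proj x))"
  proof (rule bind_pmf_cong[OF refl])
    fix x assume x: "x \<in> set_pmf (Kp t v)"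
    obtain v' ob p where xx: "x = (v', ob, p)" by (cases x) auto
    have g: "good v x" using Kp_good[OF Suc.prems x] .
    show "map_pmf proj (stepP t x) = stepW t (proj x)"
    proof (cases "p = None")
      case False
      then have "p = Some v" using g xx by (auto simp: good_def)
      have "\<forall>a. (case obs_next \<tau> v' ob a of Rev x \<Rightarrow> Some x | Pos x \<Rightarrow> Some v) \<noteq> None"
        by (auto split: obs.split)
      then have "map_pmf proj (stepP t x) = map_pmf (\<lambda>_. None) (sel t (st ob, p))"
        unfolding xx stepP_def proj_def using \<open>p = Some v\<close>
        by (auto simp: map_pmf_comp Let_def simp del: map_pmf_const intro!: map_pmf_cong)
      then show ?thesis using \<open>p = Some v\<close> unfolding xx proj_def stepW_def by simp
    next
      case True
      then obtain n where n: "ob = Pos n" "n \<le> 2*\<tau>-2" using g xx by (auto simp: good_def)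
      show ?thesis unfolding xx stepP_def proj_def stepW_def using True n
        by (auto simp: map_pmf_comp Let_def obs_next_v[OF n(2), where v=v'] intro!: map_pmf_cong split: obs.split)
    qed
  qed
  also have "\<dots> = bind_pmf (map_pmf proj (Kp t v)) (stepW t)" by (simp add: bind_map_pmf)
  finally show ?case using Suc by simp
qed

end


context envl begin

lemma Kp_set: "v \<in> {0,1} \<Longrightarrow> set_pmf (Kp t v) \<subseteq> {v} \<times> (Pos ` {..2*\<tau>-2} \<union> {Rev v}) \<times> {None, Some v}"
proof
  fix x assume v: "v \<in> {0,1}" and x: "x \<in> set_pmf (Kp t v)"
  obtain v' ob p where xx: "x = (v', ob, p)" by (cases x) auto
  have g: "good v x" using Kp_good[OF v x] .
  then have 1: "v' = v" "p \<in> {None, Some v}" using xx by (auto simp: good_def)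
  have "ob \<in> Pos ` {..2*\<tau>-2} \<union> {Rev v}" using g xx by (auto simp: good_def)
  then show "x \<in> {v} \<times> (Pos ` {..2*\<tau>-2} \<union> {Rev v}) \<times> {None, Some v}" using 1 xx by blast
qed

lemma Kp_fin: "v \<in> {0,1} \<Longrightarrow> finite (set_pmf (Kp t v))"
  by (rule finite_subset[OF Kp_set]) auto

lemma proc_fin: "finite (set_pmf (proc \<tau> sel t))"
  using Kp_fin[of 0 t] Kp_fin[of 1 t] by (simp add: set_proc)

lemma W_set: "set_pmf (W t) = proj ` set_pmf (Kp t v)" if "v \<in> {0,1}"
  using W_rel[OF that, of t, symmetric] by simp

lemma W_supp: "z \<in> set_pmf (W t) \<Longrightarrow> z = None \<or> (\<exists>n \<le> 2*\<tau>-2. z = Some (Pos n))"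
proof -
  assume "z \<in> set_pmf (W t)"
  then obtain x where x: "x \<in> set_pmf (Kp t 0)" "z = proj x" using W_set[of 0 t] by auto
  obtain v' ob p where xx: "x = (v', ob, p)" by (cases x) auto
  have g: "good 0 x" using Kp_good x by simp
  show ?thesis
  proof (cases "p = None")
    case True then show ?thesis using g xx x by (auto simp: good_def proj_def)
  next
    case False then show ?thesis using xx x by (auto simp: proj_def)
  qed
qed

lemma W_fin: "finite (set_pmf (W t))"
  using W_set[of 0 t] Kp_fin[of 0 t] by simp

lemma W_Kp: "Some ob \<in> set_pmf (W t) \<Longrightarrow> v \<in> {0,1} \<Longrightarrow> (v, ob, None) \<in> set_pmf (Kp t v)"
proof -
  assume a: "Some ob \<in> set_pmf (W t)" "v \<in> {0,1}"
  then obtain x where x: "x \<in> set_pmf (Kp t v)" "proj x = Some ob" using W_set[OF a(2), of t] by auto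
  then have "good v x" using Kp_good a by blast
  then show ?thesis using x by (auto simp: good_def proj_def split: if_splits)
qed

lemma W_reach: "Some ob \<in> set_pmf (W t) \<Longrightarrow> (st ob, None) \<in> snd ` set_pmf (agent_joint \<tau> sel t)"
  using W_Kp[of ob t 0] reach_Kp[of 0 0 ob None t] by simp

lemma AJk: "map_pmf (\<lambda>(v,(s,p)). (v, if p = None then Some s else None)) (agent_joint \<tau> sel t)
   = bind_pmf U (\<lambda>v. map_pmf (\<lambda>z. (v, map_option st z)) (W t))"
proof -
  have "map_pmf (\<lambda>(v,(s,p)). (v, if p = None then Some s else None)) (agent_joint \<tau> sel t)
     = bind_pmf U (\<lambda>v. map_pmf (\<lambda>(v,ob,p). (v, if p = None then Some (st ob) else None)) (Kp t v))"
    unfolding agent_joint_def proc_Kp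
    by (auto simp: map_pmf_comp map_bind_pmf intro!: bind_pmf_cong map_pmf_cong split: prod.splits)
  also have "\<dots> = bind_pmf U (\<lambda>v. map_pmf (\<lambda>z. (v, map_option st z)) (W t))"
  proof (rule bind_pmf_cong[OF refl])
    fix v assume v: "v \<in> set_pmf U"
    then have v': "v \<in> {0,1}" by simp
    have "map_pmf (\<lambda>(v,ob,p). (v, if p = None then Some (st ob) else None)) (Kp t v)
        = map_pmf (\<lambda>x. (v, map_option st (proj x))) (Kp t v)"
    proof (rule map_pmf_cong[OF refl])
      fix x assume "x \<in> set_pmf (Kp t v)"
      then have "good v x" using Kp_good v' by blast
      then show "(case x of (v,ob,p) \<Rightarrow> (v, if p = None then Some (st ob) else None)) = (v, map_option st (proj x))"
        by (auto simp: good_def proj_def split: prod.splits)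
    qed
    also have "\<dots> = map_pmf (\<lambda>z. (v, map_option st z)) (W t)"
      unfolding W_rel[OF v', of t, symmetric] by (simp only: map_pmf_comp)
    finally show "map_pmf (\<lambda>(v,ob,p). (v, if p = None then Some (st ob) else None)) (Kp t v)
        = map_pmf (\<lambda>z. (v, map_option st z)) (W t)" .
  qed
  finally show ?thesis .
qed

end

lemma pmf_map_collapse:
  assumes "\<And>y. k y = k z \<Longrightarrow> y = z"
  shows "pmf (map_pmf h M) z = pmf (map_pmf (\<lambda>x. k (h x)) M) (k z)"
proof -
  have "h -` {z} = (\<lambda>x. k (h x)) -` {k z}" using assms by auto
  then show ?thesis by (simp add: pmf_map)
qed

lemma pmf_pair_map: "pmf (map_pmf (\<lambda>z. (v, g z)) M) (v', w) = (if v = v' then pmf (map_pmf g M) w else 0)"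
proof (cases "v = v'")
  case True
  have "map_pmf (\<lambda>z. (v, g z)) M = map_pmf (Pair v) (map_pmf g M)" by (simp add: map_pmf_comp)
  moreover have "pmf (map_pmf (Pair v) (map_pmf g M)) (Pair v w) = pmf (map_pmf g M) w"
    by (rule pmf_map_inj') (auto simp: inj_def)
  ultimately show ?thesis using True by simp
next
  case False
  then have "(v', w) \<notin> set_pmf (map_pmf (\<lambda>z. (v, g z)) M)" by auto
  then show ?thesis using False by (simp add: set_pmf_eq)
qed

context envl begin

lemma pmf_AJ_unf: "pmf (agent_joint \<tau> sel t) (v, (n, None))
   = (if v \<in> {0,1} then pmf (map_pmf (map_option st) (W t)) (Some n) else 0) / 2"
proof -
  let ?k = "\<lambda>(v::real,(s::nat,p::real option)). (v, if p = None then Some s else None)"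
  have "pmf (agent_joint \<tau> sel t) (v, (n, None)) = pmf (map_pmf (\<lambda>x. ?k (id x)) (agent_joint \<tau> sel t)) (?k (v,(n,None)))"
    by (subst pmf_map_collapse[of ?k _ id, symmetric]) (auto split: if_splits)
  also have "\<dots> = pmf (map_pmf ?k (agent_joint \<tau> sel t)) (v, Some n)" by simp
  also have "\<dots> = pmf (bind_pmf U (\<lambda>v. map_pmf (\<lambda>z. (v, map_option st z)) (W t))) (v, Some n)"
    by (simp only: AJk)
  also have "\<dots> = (if v \<in> {0,1} then pmf (map_pmf (map_option st) (W t)) (Some n) else 0) / 2"
    by (simp add: pmf_bindU pmf_pair_map)
  finally show ?thesis .
qed

lemma AJ_fst: "y \<in> set_pmf (agent_joint \<tau> sel t) \<Longrightarrow> fst y \<in> {0,1}"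
  unfolding agent_joint_def set_map_pmf set_proc using Kp_good by (fastforce simp: good_def)

lemma AJ_inf: "(v, (n, Some w)) \<in> set_pmf (agent_joint \<tau> sel t) \<Longrightarrow> v = w"
  unfolding agent_joint_def set_map_pmf set_proc using Kp_good by (fastforce simp: good_def)

lemma posterior_unf:
  assumes ob: "Some ob \<in> set_pmf (W t)"
  shows "posterior \<tau> sel t (st ob, None) = U"
proof -
  define n where "n = st ob"
  define x where "x = (n, None :: real option)"
  define A where "A = {y :: real \<times> nat \<times> real option. snd y = x}"
  define AJ where "AJ = agent_joint \<tau> sel t"
  define c where "c = pmf (map_pmf (map_option st) (W t)) (Some n)"
  have "Some n \<in> set_pmf (map_pmf (map_option st) (W t))" using ob n_def by force
  then have c0: "c > 0" unfolding c_def by (simp add: pmf_positive)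
  have pAJ: "pmf AJ (v, x) = (if v \<in> {0,1} then c else 0) / 2" for v
    unfolding AJ_def x_def c_def by (rule pmf_AJ_unf)
  have ne: "set_pmf AJ \<inter> A \<noteq> {}"
  proof -
    have "pmf AJ (0, x) > 0" using pAJ[of 0] c0 by simp
    then have "(0, x) \<in> set_pmf AJ" by (simp add: set_pmf_iff)
    then show ?thesis unfolding A_def by auto
  qed
  have "A \<inter> set_pmf AJ = {(0,x),(1,x)} \<inter> set_pmf AJ"
    using AJ_fst unfolding A_def AJ_def by force
  then have "measure (measure_pmf AJ) A = measure (measure_pmf AJ) {(0,x),(1,x)}"
    by (metis measure_Int_set_pmf)
  also have "\<dots> = pmf AJ (0,x) + pmf AJ (1,x)" by (simp add: measure_measure_pmf_finite)
  also have "\<dots> = c" using pAJ[of 0] pAJ[of 1] by simp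
  finally have mA: "measure (measure_pmf AJ) A = c" .
  have C: "cond_pmf AJ A = map_pmf (\<lambda>v. (v, x)) U"
  proof (rule pmf_eqI)
    fix y :: "real \<times> nat \<times> real option"
    obtain v x' where yy: "y = (v, x')" by (cases y) auto
    show "pmf (cond_pmf AJ A) y = pmf (map_pmf (\<lambda>v. (v, x)) U) y"
    proof (cases "x' = x")
      case True
      have "pmf (map_pmf (\<lambda>v. (v, x)) U) (v, x) = pmf U v"
        by (rule pmf_map_inj') (auto simp: inj_def)
      moreover have "pmf (cond_pmf AJ A) (v,x) = pmf AJ (v,x) / c" using pmf_cond[OF ne] mA unfolding A_def by simp
      moreover have "pmf U v = (if v \<in> {0,1} then 1 else 0) / 2" by (simp add: indicator_def)
      ultimately show ?thesis using True yy pAJ[of v] c0 by (cases "v \<in> {0,1}") auto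
    next
      case False
      have "y \<notin> set_pmf (map_pmf (\<lambda>v. (v, x)) U)" using False yy by auto
      then show ?thesis using False yy pmf_cond[OF ne] unfolding A_def by (simp add: set_pmf_eq)
    qed
  qed
  show ?thesis unfolding posterior_def AJ_def[symmetric] n_def[symmetric] x_def[symmetric] A_def[symmetric]
    using C by (simp add: map_pmf_comp)
qed

lemma posterior_inf:
  assumes "(n, Some w) \<in> snd ` set_pmf (agent_joint \<tau> sel t)"
  shows "posterior \<tau> sel t (n, Some w) = return_pmf w"
proof -
  define A where "A = {y :: real \<times> nat \<times> real option. snd y = (n, Some w)}"
  define AJ where "AJ = agent_joint \<tau> sel t"
  have ne: "set_pmf AJ \<inter> A \<noteq> {}" using assms unfolding A_def AJ_def by force
  have "set_pmf (cond_pmf AJ A) \<subseteq> {(w, (n, Some w))}"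
    using set_cond_pmf[OF ne] AJ_inf unfolding A_def AJ_def by force
  then have "cond_pmf AJ A = return_pmf (w, (n, Some w))" by (simp add: set_pmf_subset_singleton)
  then show ?thesis unfolding posterior_def AJ_def[symmetric] A_def[symmetric] by simp
qed

end


lemma pistar_max: "Qstar \<tau> r v s (pistar \<tau> r v s) = Vstar \<tau> r v s"
  unfolding pistar_def Vstar_def by auto

lemma pistar_act: "pistar \<tau> r v s \<in> {0,1}"
  unfolding pistar_def by auto

lemma ids_ratio_point:
  "ids_ratio \<tau> r (return_pmf w) s \<nu> =
     ratio_e ((measure_pmf.expectation \<nu> (\<lambda>a. Vstar \<tau> r w s - Qstar \<tau> r w s a))\<^sup>2) 0"
proof -
  have "mutinf2 (bind_pmf (return_pmf w) (\<lambda>v. map_pmf (\<lambda>a. (pistar \<tau> r v s, (a, Qstar \<tau> r v s a))) \<nu>)) = 0"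
  proof -
    have "bind_pmf (return_pmf w) (\<lambda>v. map_pmf (\<lambda>a. (pistar \<tau> r v s, (a, Qstar \<tau> r v s a))) \<nu>)
       = map_pmf (\<lambda>z. (pistar \<tau> r w s, z)) (map_pmf (\<lambda>a. (a, Qstar \<tau> r w s a)) \<nu>)"
      by (simp add: bind_return_pmf map_pmf_comp)
    then show ?thesis by (simp only: mutinf_const)
  qed
  then show ?thesis unfolding ids_ratio_def by (simp add: pair_return_pmf1)
qed

lemma ratio_e_le0: "ratio_e n 0 \<le> 0 \<Longrightarrow> n = 0"
  unfolding ratio_e_def by (auto split: if_splits)

lemma ratio_e_0n: "ratio_e 0 d = 0"
  unfolding ratio_e_def by auto

context envl begin

lemma informed_zero:
  assumes x: "(s, Some w) \<in> snd ` set_pmf (agent_joint \<tau> sel t)"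
  shows "measure_pmf.expectation (sel t (s, Some w)) (\<lambda>a. Vstar \<tau> r w s - Qstar \<tau> r w s a) = 0"
proof -
  have post: "posterior \<tau> sel t (s, Some w) = return_pmf w" using posterior_inf[OF x] .
  have i: "ids_ratio \<tau> r (return_pmf w) s (sel t (s, Some w)) \<le> ids_ratio \<tau> r (return_pmf w) s (return_pmf (pistar \<tau> r w s))"
    using ids_at[OF x] post pistar_act[of \<tau> r w s] by (auto simp: action_dist_def)
  have "ids_ratio \<tau> r (return_pmf w) s (return_pmf (pistar \<tau> r w s)) = 0"
    unfolding ids_ratio_point by (simp add: pistar_max ratio_e_0n)
  then have "ratio_e ((measure_pmf.expectation (sel t (s, Some w)) (\<lambda>a. Vstar \<tau> r w s - Qstar \<tau> r w s a))\<^sup>2) 0 \<le> 0"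
    using i unfolding ids_ratio_point by simp
  then show ?thesis using ratio_e_le0 by fastforce
qed

lemma Qvals:
  assumes s: "s \<le> \<tau> - 2"
  shows "Qstar \<tau> r v s 0 = r s" "Qstar \<tau> r 1 s 1 = 1" "Qstar \<tau> r 0 s 1 = Mx \<tau> r (s+1)"
    "Vstar \<tau> r 1 s = 1" "Vstar \<tau> r 0 s = max (r s) (Mx \<tau> r (s+1))"
proof -
  show "Qstar \<tau> r v s 0 = r s" using Qstar_top0[OF tau s] .
  have s1: "s + 1 \<le> \<tau> - 1" using s tau by simp
  have s2: "s \<le> \<tau> - 1" "s < \<tau> - 1" using s tau by auto
  show "Qstar \<tau> r 1 s 1 = 1" "Qstar \<tau> r 0 s 1 = Mx \<tau> r (s+1)"
    using Qstar_top1[OF tau s] Vstar_top[OF tau rr s1] by auto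
  show "Vstar \<tau> r 1 s = 1" "Vstar \<tau> r 0 s = max (r s) (Mx \<tau> r (s+1))"
    using Vstar_top[OF tau rr s2(1)] Mx_step[OF s2(2)] by auto
qed

lemma xy_bounds: "s \<le> \<tau> - 2 \<Longrightarrow> 0 \<le> r s \<and> r s < 1 \<and> 0 \<le> Mx \<tau> r (s+1) \<and> Mx \<tau> r (s+1) < 1"
  using rr tau Mx_bounds[OF rr, of "s+1"] by (auto dest: spec[of _ s])

lemma pistar_rec:
  assumes s: "s \<le> \<tau> - 2" and rec: "Mx \<tau> r (s+1) \<le> r s"
  shows "pistar \<tau> r 0 s = 0" "pistar \<tau> r 1 s = 1"
  using Qvals[OF s] rec xy_bounds[OF s] unfolding pistar_def by auto

lemma pistar_nonrec:
  assumes s: "s \<le> \<tau> - 2" and rec: "r s < Mx \<tau> r (s+1)"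
  shows "pistar \<tau> r 0 s = 1" "pistar \<tau> r 1 s = 1"
  using Qvals[OF s] rec xy_bounds[OF s] unfolding pistar_def by auto

lemma num_unf:
  assumes s: "s \<le> \<tau> - 2" and nu: "action_dist \<nu>"
  shows "measure_pmf.expectation (pair_pmf U \<nu>) (\<lambda>(v, a). Vstar \<tau> r v s - Qstar \<tau> r v s a)
    = (if Mx \<tau> r (s+1) \<le> r s then regq (r s) (Mx \<tau> r (s+1)) (pmf \<nu> 1)
       else (1 - pmf \<nu> 1) * (1 - 2 * r s + Mx \<tau> r (s+1)) / 2)"
  using Qvals[OF s] unfolding exp_pairU[OF nu] regq_def by (auto simp: max_def field_simps)

lemma mi_nonrec:
  assumes s: "s \<le> \<tau> - 2" and rec: "r s < Mx \<tau> r (s+1)"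
  shows "mutinf2 (bind_pmf U (\<lambda>v. map_pmf (\<lambda>a. (pistar \<tau> r v s, (a, Qstar \<tau> r v s a))) \<nu>)) = 0"
proof -
  have "bind_pmf U (\<lambda>v. map_pmf (\<lambda>a. (pistar \<tau> r v s, (a, Qstar \<tau> r v s a))) \<nu>)
      = bind_pmf U (\<lambda>v. map_pmf (\<lambda>z. (1, z)) (map_pmf (\<lambda>a. (a, Qstar \<tau> r v s a)) \<nu>))"
    using pistar_nonrec[OF s rec] by (auto simp: map_pmf_comp intro!: bind_pmf_cong)
  also have "\<dots> = map_pmf (\<lambda>z. (1, z)) (bind_pmf U (\<lambda>v. map_pmf (\<lambda>a. (a, Qstar \<tau> r v s a)) \<nu>))"
    by (simp add: map_bind_pmf)
  finally show ?thesis by (simp only: mutinf_const)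
qed

lemma mi_rec:
  assumes s: "s \<le> \<tau> - 2" and rec: "Mx \<tau> r (s+1) \<le> r s" and nu: "action_dist \<nu>"
  shows "mutinf2 (bind_pmf U (\<lambda>v. map_pmf (\<lambda>a. (pistar \<tau> r v s, (a, Qstar \<tau> r v s a))) \<nu>)) = pmf \<nu> 1"
proof -
  define x where "x = r s"
  define y where "y = Mx \<tau> r (s+1)"
  define q where "q = pmf \<nu> 1"
  have y1: "y < 1" "y \<noteq> 1" using xy_bounds[OF s] y_def by auto
  have q01: "0 \<le> q" "q \<le> 1" unfolding q_def by (auto simp: pmf_le_1)
  define h where "h = (\<lambda>v::real. \<lambda>a::nat. if v = 0 then (0::nat, (a, if a = 0 then x else y)) else (1, (a, if a = 0 then x else 1)))"
  have J: "bind_pmf U (\<lambda>v. map_pmf (\<lambda>a. (pistar \<tau> r v s, (a, Qstar \<tau> r v s a))) \<nu>) = bind_pmf U (\<lambda>v. map_pmf (h v) \<nu>)"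
  proof (rule bind_pmf_cong[OF refl], rule map_pmf_cong[OF refl])
    fix v a assume v: "v \<in> set_pmf U" and a: "a \<in> set_pmf \<nu>"
    then have "v = 0 \<or> v = 1" "a = 0 \<or> a = 1" using nu by (auto simp: action_dist_def)
    then show "(pistar \<tau> r v s, (a, Qstar \<tau> r v s a)) = h v a"
      using pistar_rec[OF s rec] Qvals[OF s] unfolding h_def x_def y_def by auto
  qed
  define JJ where "JJ = bind_pmf U (\<lambda>v. map_pmf (h v) \<nu>)"
  have pJ: "pmf JJ z = (pmf (map_pmf (h 0) \<nu>) z + pmf (map_pmf (h 1) \<nu>) z) / 2" for z
    unfolding JJ_def by (rule pmf_bindU)
  have hm: "pmf (map_pmf (h v) \<nu>) z = (if h v 0 = z then 1 - q else 0) + (if h v 1 = z then q else 0)" for v z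
    unfolding q_def by (rule pmf_map_act[OF nu])
  have hm0: "pmf (map_pmf (h 0) \<nu>) z = (if (0,(0,x)) = z then 1 - q else 0) + (if (0,(1,y)) = z then q else 0)" for z
    using hm[of 0 z] unfolding h_def by simp
  have hm1: "pmf (map_pmf (h 1) \<nu>) z = (if (1,(0,x)) = z then 1 - q else 0) + (if (1,(1,1)) = z then q else 0)" for z
    using hm[of 1 z] unfolding h_def by simp
  have p1: "pmf JJ (0,(0,x)) = (1-q)/2" using pJ hm0 hm1 by simp
  have p2: "pmf JJ (Suc 0,(0,x)) = (1-q)/2" using pJ hm0 hm1 by simp
  have p3: "pmf JJ (0,(Suc 0,y)) = q/2" using pJ hm0 hm1 by simp
  have p4: "pmf JJ (Suc 0,(Suc 0,1)) = q/2" using pJ hm0 hm1 y1 by simp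
  define A where "A = {(0::nat,(0::nat,x)), (1,(0,x)), (0,(1,y)), (1,(1,1))}"
  have setJ: "set_pmf JJ \<subseteq> A" using nu unfolding JJ_def A_def h_def action_dist_def by auto
  have HJ: "entropy2 JJ = - ((1-q) * log 2 ((1-q)/2) + q * log 2 (q/2))"
  proof -
    have "entropy2 JJ = - (\<Sum>z\<in>A. pmf JJ z * log 2 (pmf JJ z))" using setJ unfolding A_def by (intro entropy2_sum) auto
    also have "\<dots> = - (2 * ((1-q)/2 * log 2 ((1-q)/2)) + 2 * (q/2 * log 2 (q/2)))"
      unfolding A_def by (simp add: p1 p2 p3 p4)
    finally show ?thesis by simp
  qed
  have fstJ: "map_pmf fst JJ = bind_pmf U (\<lambda>v. return_pmf (if v = 0 then 0 else 1))"
    unfolding JJ_def map_bind_pmf by (auto simp: map_pmf_comp h_def intro!: bind_pmf_cong)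
  have Hf: "entropy2 (map_pmf fst JJ) = 1"
  proof -
    have "entropy2 (map_pmf fst JJ) = - (\<Sum>z\<in>{0::nat,1}. pmf (map_pmf fst JJ) z * log 2 (pmf (map_pmf fst JJ) z))"
      unfolding fstJ by (intro entropy2_sum) auto
    also have "\<dots> = - (2 * (1/2 * log 2 (1/2)))" unfolding fstJ by (simp add: pmf_bindU)
    finally show ?thesis by (simp add: log_divide)
  qed
  have sndJ: "map_pmf snd JJ = bind_pmf U (\<lambda>v. map_pmf (\<lambda>a. snd (h v a)) \<nu>)"
    unfolding JJ_def map_bind_pmf by (simp add: map_pmf_comp)
  have Hs: "entropy2 (map_pmf snd JJ) = - ((1-q) * log 2 (1-q) + q * log 2 (q/2))"
  proof -
    have hm2: "pmf (map_pmf (\<lambda>a. snd (h v a)) \<nu>) z = (if snd (h v 0) = z then 1 - q else 0) + (if snd (h v 1) = z then q else 0)" for v z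
      unfolding q_def by (rule pmf_map_act[OF nu])
    have g0: "pmf (map_pmf (\<lambda>a. snd (h 0 a)) \<nu>) z = (if (0,x) = z then 1 - q else 0) + (if (1,y) = z then q else 0)" for z
      using hm2[of 0 z] unfolding h_def by simp
    have g1: "pmf (map_pmf (\<lambda>a. snd (h 1 a)) \<nu>) z = (if (0,x) = z then 1 - q else 0) + (if (1,1) = z then q else 0)" for z
      using hm2[of 1 z] unfolding h_def by simp
    have s1: "pmf (map_pmf snd JJ) (0,x) = 1 - q" unfolding sndJ pmf_bindU using g0 g1 y1 by simp
    have s2: "pmf (map_pmf snd JJ) (Suc 0,y) = q/2" unfolding sndJ pmf_bindU using g0 g1 y1 by simp
    have s3: "pmf (map_pmf snd JJ) (Suc 0,1) = q/2" unfolding sndJ pmf_bindU using g0 g1 y1 by simp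
    have "entropy2 (map_pmf snd JJ) = - (\<Sum>z\<in>{(0::nat,x),(1,y),(1,1)}. pmf (map_pmf snd JJ) z * log 2 (pmf (map_pmf snd JJ) z))"
      unfolding sndJ using nu y1 by (intro entropy2_sum) (auto simp: h_def action_dist_def)
    also have "\<dots> = - ((1-q) * log 2 (1-q) + 2 * (q/2 * log 2 (q/2)))"
      using y1 by (simp add: s1 s2 s3)
    finally show ?thesis by simp
  qed
  have "mutinf2 JJ = 1 + (- ((1-q) * log 2 (1-q) + q * log 2 (q/2))) - (- ((1-q) * log 2 ((1-q)/2) + q * log 2 (q/2)))"
    unfolding mutinf2_def Hf Hs HJ by simp
  also have "\<dots> = q" using xlog[of "1-q"] q01 by simp
  finally show ?thesis unfolding J JJ_def[symmetric] q_def .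
qed

definition Rg :: "nat \<Rightarrow> nat \<Rightarrow> real" where
  "Rg t s = measure_pmf.expectation (pair_pmf U (sel t (s, None))) (\<lambda>(v, a). Vstar \<tau> r v s - Qstar \<tau> r v s a)"

lemma unf_setup:
  assumes ob: "Some (Pos s) \<in> set_pmf (W t)"
  shows "action_dist (sel t (s, None)) \<and> (\<forall>\<nu>. action_dist \<nu> \<longrightarrow> ids_ratio \<tau> r U s (sel t (s, None)) \<le> ids_ratio \<tau> r U s \<nu>)"
proof -
  have x: "(s, None) \<in> snd ` set_pmf (agent_joint \<tau> sel t)" using W_reach[OF ob] by (simp add: st_def)
  have "posterior \<tau> sel t (s, None) = U" using posterior_unf[OF ob] by (simp add: st_def)
  then show ?thesis using ids_at[OF x] by simp
qed

lemma ratio_unf: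
  assumes s: "s \<le> \<tau> - 2" and nu: "action_dist \<nu>"
  shows "ids_ratio \<tau> r U s \<nu> = (if Mx \<tau> r (s+1) \<le> r s
     then ratio_e ((regq (r s) (Mx \<tau> r (s+1)) (pmf \<nu> 1))\<^sup>2) (pmf \<nu> 1)
     else ratio_e (((1 - pmf \<nu> 1) * (1 - 2 * r s + Mx \<tau> r (s+1)) / 2)\<^sup>2) 0)"
  unfolding ids_ratio_def num_unf[OF s nu] using mi_rec[OF s _ nu] mi_nonrec[OF s] by auto

lemma unf_rec:
  assumes s: "s \<le> \<tau> - 2" and ob: "Some (Pos s) \<in> set_pmf (W t)" and rec: "Mx \<tau> r (s+1) \<le> r s"
  shows "pmf (sel t (s, None)) 1 = pst (r s) (Mx \<tau> r (s+1)) \<and> Rg t s = regq (r s) (Mx \<tau> r (s+1)) (pmf (sel t (s, None)) 1)"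
proof -
  define x where "x = r s"
  define y where "y = Mx \<tau> r (s+1)"
  define q where "q = pmf (sel t (s, None)) 1"
  define p where "p = pst x y"
  have b: "0 \<le> y" "y \<le> x" "x < 1" using xy_bounds[OF s] rec x_def y_def by auto
  have pb: "0 < p" "p \<le> 1" using pst_bounds[OF b] p_def by auto
  have su: "action_dist (sel t (s, None))" "\<And>\<nu>. action_dist \<nu> \<Longrightarrow> ids_ratio \<tau> r U s (sel t (s, None)) \<le> ids_ratio \<tau> r U s \<nu>"
    using unf_setup[OF ob] by auto
  define \<nu>s where "\<nu>s = map_pmf (\<lambda>b. if b then 1 else (0::nat)) (bernoulli_pmf p)"
  have nus: "action_dist \<nu>s" "pmf \<nu>s 1 = p" using bern_act[of p] pb unfolding \<nu>s_def by auto
  have r1: "ids_ratio \<tau> r U s (sel t (s, None)) = ratio_e ((regq x y q)\<^sup>2) q"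
    using ratio_unf[OF s su(1)] rec unfolding x_def y_def q_def by simp
  have r2: "ids_ratio \<tau> r U s \<nu>s = ereal ((regq x y p)\<^sup>2 / p)"
    using ratio_unf[OF s nus(1)] rec pb unfolding x_def y_def nus(2) ratio_e_def by simp
  have le: "ratio_e ((regq x y q)\<^sup>2) q \<le> ereal ((regq x y p)\<^sup>2 / p)" using su(2)[OF nus(1)] r1 r2 by simp
  have q0: "q \<noteq> 0"
  proof
    assume "q = 0"
    moreover have "regq x y 0 \<noteq> 0" using b unfolding regq_def by simp
    ultimately show False using le unfolding ratio_e_def by simp
  qed
  have q01: "0 < q" "q \<le> 1" using q0 unfolding q_def by (auto simp: pmf_le_1 order.not_eq_order_implies_strict)
  have "(regq x y q)\<^sup>2 / q \<le> (regq x y p)\<^sup>2 / p" using le q0 unfolding ratio_e_def by simp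
  then have "q = p" unfolding p_def using pst_unique[OF b q01] by simp
  moreover have "Rg t s = regq x y q"
    unfolding Rg_def num_unf[OF s su(1)] using rec unfolding x_def y_def q_def by simp
  ultimately show ?thesis unfolding x_def y_def q_def p_def by simp
qed

lemma unf_nonrec:
  assumes s: "s \<le> \<tau> - 2" and ob: "Some (Pos s) \<in> set_pmf (W t)" and rec: "r s < Mx \<tau> r (s+1)"
  shows "pmf (sel t (s, None)) 1 = 1 \<and> Rg t s = 0"
proof -
  define x where "x = r s"
  define y where "y = Mx \<tau> r (s+1)"
  define q where "q = pmf (sel t (s, None)) 1"
  have b: "0 \<le> x" "x < y" "y < 1" using xy_bounds[OF s] rec x_def y_def by auto
  have su: "action_dist (sel t (s, None))" "\<And>\<nu>. action_dist \<nu> \<Longrightarrow> ids_ratio \<tau> r U s (sel t (s, None)) \<le> ids_ratio \<tau> r U s \<nu>"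
    using unf_setup[OF ob] by auto
  have a1: "action_dist (return_pmf 1)" by (simp add: action_dist_def)
  have r1: "ids_ratio \<tau> r U s (sel t (s, None)) = ratio_e (((1 - q) * (1 - 2 * x + y) / 2)\<^sup>2) 0"
    using ratio_unf[OF s su(1)] rec unfolding x_def y_def q_def by simp
  have r2: "ids_ratio \<tau> r U s (return_pmf 1) = 0"
    using ratio_unf[OF s a1] rec by (simp add: ratio_e_0n)
  have "ratio_e (((1 - q) * (1 - 2 * x + y) / 2)\<^sup>2) 0 \<le> 0" using su(2)[OF a1] r1 r2 by simp
  then have "((1 - q) * (1 - 2 * x + y) / 2)\<^sup>2 = 0" by (rule ratio_e_le0)
  then have n0: "(1 - q) * (1 - 2 * x + y) = 0" by simp
  have "1 - 2 * x + y > 0" using b by simp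
  then have "q = 1" using n0 by simp
  moreover have "Rg t s = (1 - q) * (1 - 2 * x + y) / 2"
    unfolding Rg_def num_unf[OF s su(1)] using rec unfolding x_def y_def q_def by simp
  ultimately show ?thesis using n0 unfolding q_def by simp
qed

end


context envl begin

primrec ReachD :: "nat \<Rightarrow> nat \<Rightarrow> real" where
  "ReachD t 0 = 1"
| "ReachD t (Suc d) = pmf (sel t (\<tau> - 2 - d, None)) 1 * ReachD (Suc t) d"

lemma ReachD_nonneg: "0 \<le> ReachD t d"
  by (induction d arbitrary: t) auto

lemma W_step_mem:
  assumes ob: "Some (Pos s) \<in> set_pmf (W t)" and s: "s \<le> \<tau> - 2" and q: "pmf (sel t (s, None)) 1 > 0"
  shows "Some (Pos (s+1)) \<in> set_pmf (W (Suc t))"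
proof -
  have a: "1 \<in> set_pmf (sel t (s, None))" using q by (simp add: set_pmf_iff)
  have "obs_next \<tau> 0 (Pos s) 1 = Pos (s+1)" using s tau by (auto simp: obs_next_def)
  then have "Some (Pos (s+1)) \<in> set_pmf (stepW t (Some (Pos s)))"
    unfolding stepW_def using a by (force simp: st_def)
  then show ?thesis using ob by auto
qed

lemma Rg_late: "\<tau> - 1 \<le> s \<Longrightarrow> Rg t s = 0"
proof -
  assume s: "\<tau> - 1 \<le> s"
  have "(\<lambda>(v, a). Vstar \<tau> r v s - Qstar \<tau> r v s a) = (\<lambda>_. 0::real)"
    using Qstar_late[OF tau s] by auto
  then show ?thesis unfolding Rg_def by simp
qed

lemma reach_bound:
  "\<forall>t s. s \<le> \<tau> - 1 \<longrightarrow> \<tau> - 1 - s = d \<longrightarrow> Some (Pos s) \<in> set_pmf (W t) \<longrightarrow>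
     phi (Mx \<tau> r s) \<le> ReachD t d \<and> (Rg t s)\<^sup>2 \<le> ReachD t d / 8 \<and> 0 \<le> Rg t s"
proof (induction d)
  case 0
  show ?case
  proof (intro allI impI)
    fix t s assume "s \<le> \<tau> - 1" "\<tau> - 1 - s = 0" "Some (Pos s) \<in> set_pmf (W t)"
    then have s: "s = \<tau> - 1" by simp
    then show "phi (Mx \<tau> r s) \<le> ReachD t 0 \<and> (Rg t s)\<^sup>2 \<le> ReachD t 0 / 8 \<and> 0 \<le> Rg t s"
      using Rg_late[of s t] Mx_last[of \<tau> s r] by (simp add: phi_def)
  qed
next
  case (Suc d)
  show ?case
  proof (intro allI impI)
    fix t s assume s1: "s \<le> \<tau> - 1" and sd: "\<tau> - 1 - s = Suc d" and ob: "Some (Pos s) \<in> set_pmf (W t)"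
    have s: "s \<le> \<tau> - 2" "\<tau> - 2 - d = s" "s < \<tau> - 1" using s1 sd by auto
    define q where "q = pmf (sel t (s, None)) 1"
    define x where "x = r s"
    define y where "y = Mx \<tau> r (s+1)"
    have R: "ReachD t (Suc d) = q * ReachD (Suc t) d" using s(2) unfolding q_def by simp
    have Ms: "Mx \<tau> r s = max x y" using Mx_step[OF s(3)] unfolding x_def y_def by simp
    have b: "0 \<le> x" "x < 1" "0 \<le> y" "y < 1" using xy_bounds[OF s(1)] x_def y_def by auto
    have IH: "q > 0 \<Longrightarrow> phi y \<le> ReachD (Suc t) d"
    proof -
      assume "q > 0"
      then have "Some (Pos (s+1)) \<in> set_pmf (W (Suc t))" using W_step_mem[OF ob s(1)] q_def by simp
      moreover have "s + 1 \<le> \<tau> - 1" "\<tau> - 1 - (s+1) = d" using s sd by auto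
      ultimately show ?thesis using Suc.IH unfolding y_def by blast
    qed
    show "phi (Mx \<tau> r s) \<le> ReachD t (Suc d) \<and> (Rg t s)\<^sup>2 \<le> ReachD t (Suc d) / 8 \<and> 0 \<le> Rg t s"
    proof (cases "y \<le> x")
      case True
      have u: "q = pst x y" "Rg t s = regq x y q"
        using unf_rec[OF s(1) ob] True unfolding q_def x_def y_def by auto
      have pb: "0 < pst x y" "pst x y \<le> 1" using pst_bounds[of y x] b True by auto
      have ih: "phi y \<le> ReachD (Suc t) d" using IH u pb by simp
      have "phi x \<le> pst x y * phi y" using pst_A[of y x] b True by simp
      also have "\<dots> \<le> pst x y * ReachD (Suc t) d" using ih pb by (intro mult_left_mono) auto
      finally have "phi (Mx \<tau> r s) \<le> q * ReachD (Suc t) d" using Ms True u by (simp add: max_def)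
      then have A: "phi (Mx \<tau> r s) \<le> ReachD t (Suc d)" by (simp only: R)
      have "(regq x y (pst x y))\<^sup>2 \<le> pst x y * phi y / 8" using pst_B[of y x] b True by simp
      also have "\<dots> \<le> pst x y * ReachD (Suc t) d / 8" using ih pb by (intro divide_right_mono mult_left_mono) auto
      finally have "(Rg t s)\<^sup>2 \<le> q * ReachD (Suc t) d / 8" using u by simp
      then have B: "(Rg t s)\<^sup>2 \<le> ReachD t (Suc d) / 8" by (simp only: R)
      have "0 \<le> regq x y (pst x y)" unfolding regq_def using pb b True by simp
      then show ?thesis using A B u by simp
    next
      case False
      have u: "q = 1" "Rg t s = 0" using unf_nonrec[OF s(1) ob] False unfolding q_def x_def y_def by auto
      have ih: "phi y \<le> ReachD (Suc t) d" using IH u by simp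
      then have "phi (Mx \<tau> r s) \<le> q * ReachD (Suc t) d \<and> (Rg t s)\<^sup>2 \<le> q * ReachD (Suc t) d / 8 \<and> 0 \<le> Rg t s"
        using Ms False u ReachD_nonneg[of "Suc t" d] by (simp add: max_def)
      then show ?thesis by (simp only: R)
    qed
  qed
qed

definition Psi :: "nat \<Rightarrow> nat \<Rightarrow> obs option \<Rightarrow> real" where
  "Psi T t z = (case z of None \<Rightarrow> 1 | Some ob \<Rightarrow> (case ob of
      Pos s \<Rightarrow> if s \<le> \<tau> - 1 \<and> t + (\<tau> - s) \<le> T then ReachD t (\<tau> - 1 - s) else 0
    | Rev w \<Rightarrow> 0))"

lemma Psi_nonneg: "0 \<le> Psi T t z"
  unfolding Psi_def using ReachD_nonneg by (auto split: option.split obs.split)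

lemma sel_act_W: "Some ob \<in> set_pmf (W t) \<Longrightarrow> action_dist (sel t (st ob, None))"
  using W_reach ids_at by blast

lemma stepW_fin: "z \<in> set_pmf (W t) \<Longrightarrow> finite (set_pmf (stepW t z))"
  using sel_act_W act_fin unfolding stepW_def by (auto split: option.split)

lemma exp_stepW_Some:
  assumes "action_dist (sel t (st ob, None))"
  shows "measure_pmf.expectation (stepW t (Some ob)) f
    = (1 - pmf (sel t (st ob, None)) 1) * f (case obs_next \<tau> 0 ob 0 of Rev _ \<Rightarrow> None | Pos n \<Rightarrow> Some (Pos n))
      + pmf (sel t (st ob, None)) 1 * f (case obs_next \<tau> 0 ob 1 of Rev _ \<Rightarrow> None | Pos n \<Rightarrow> Some (Pos n))"
  unfolding stepW_def using exp_act[OF assms] by simp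

lemma Psi_step:
  assumes tT: "t < T" and z: "z \<in> set_pmf (W t)"
  shows "Psi T t z \<le> measure_pmf.expectation (stepW t z) (Psi T (Suc t))"
proof (cases z)
  case None
  then show ?thesis by (simp add: stepW_def Psi_def)
next
  case (Some ob)
  then obtain s where s: "ob = Pos s" "s \<le> 2*\<tau>-2" using W_supp[OF z] by auto
  have act: "action_dist (sel t (s, None))" using sel_act_W[of ob t] z Some s by (simp add: st_def)
  define q where "q = pmf (sel t (s, None)) 1"
  have q01: "0 \<le> q" "q \<le> 1" unfolding q_def by (auto simp: pmf_le_1)
  define g where "g = (\<lambda>a. case obs_next \<tau> 0 (Pos s) a of Rev _ \<Rightarrow> None | Pos n \<Rightarrow> Some (Pos n))"
  have E: "measure_pmf.expectation (stepW t z) (Psi T (Suc t)) = (1 - q) * Psi T (Suc t) (g 0) + q * Psi T (Suc t) (g 1)"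
    using exp_stepW_Some[of t ob "Psi T (Suc t)"] act Some s unfolding q_def g_def by (simp add: st_def)
  have E0: "0 \<le> (1 - q) * Psi T (Suc t) (g 0)" using q01 Psi_nonneg by simp
  have E1: "0 \<le> q * Psi T (Suc t) (g 1)" using q01 Psi_nonneg by simp
  show ?thesis
  proof (cases "s \<le> \<tau> - 1 \<and> t + (\<tau> - s) \<le> T")
    case False
    have "Psi T t z = (if s \<le> \<tau> - 1 \<and> t + (\<tau> - s) \<le> T then ReachD t (\<tau> - 1 - s) else 0)"
      unfolding Psi_def Some s by simp
    then have "Psi T t z = 0" by (simp only: if_not_P[OF False])
    then show ?thesis using E E0 E1 by simp
  next
    case True
    show ?thesis
    proof (cases "s = \<tau> - 1")
      case True
      then have "obs_next \<tau> 0 (Pos s) a = Rev 0" for a using tau by (auto simp: obs_next_def)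
      then have "g a = None" for a unfolding g_def by simp
      then have "measure_pmf.expectation (stepW t z) (Psi T (Suc t)) = 1" using E by (simp add: Psi_def)
      moreover have "Psi T t z = 1" unfolding Psi_def Some s using True \<open>s \<le> \<tau> - 1 \<and> t + (\<tau> - s) \<le> T\<close> by simp
      ultimately show ?thesis by simp
    next
      case False
      then have s2: "s \<le> \<tau> - 2" using True by auto
      have "obs_next \<tau> 0 (Pos s) 1 = Pos (s+1)" using s2 tau by (auto simp: obs_next_def)
      then have g1: "g 1 = Some (Pos (s+1))" unfolding g_def by simp
      have c: "s + 1 \<le> \<tau> - 1 \<and> Suc t + (\<tau> - (s+1)) \<le> T" using True s2 tau by auto
      have "Psi T (Suc t) (g 1) = ReachD (Suc t) (\<tau> - 1 - (s+1))" unfolding g1 Psi_def using c by simp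
      moreover have "\<tau> - 1 - s = Suc (\<tau> - 1 - (s+1))" "\<tau> - 2 - (\<tau> - 1 - (s+1)) = s" using s2 tau by auto
      ultimately have "q * Psi T (Suc t) (g 1) = ReachD t (\<tau> - 1 - s)" unfolding q_def by simp
      moreover have "Psi T t z = ReachD t (\<tau> - 1 - s)" unfolding Psi_def Some s using True by simp
      ultimately show ?thesis using E E0 by simp
    qed
  qed
qed

lemma exp_W_Suc: "measure_pmf.expectation (W (Suc t)) (f :: _ \<Rightarrow> real) = measure_pmf.expectation (W t) (\<lambda>z. measure_pmf.expectation (stepW t z) f)"
  by (simp only: W.simps) (rule exp_bind_fin[OF W_fin stepW_fin])

lemma exp_mono_fin:
  assumes "finite (set_pmf p)" "\<And>x. x \<in> set_pmf p \<Longrightarrow> f x \<le> g x"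
  shows "measure_pmf.expectation p f \<le> measure_pmf.expectation p (g :: _ \<Rightarrow> real)"
  using assms by (intro integral_mono_AE) (auto simp: integrable_measure_pmf_finite AE_measure_pmf_iff)

lemma Psi_mono: "t + j \<le> T \<Longrightarrow> measure_pmf.expectation (W t) (Psi T t) \<le> measure_pmf.expectation (W (t+j)) (Psi T (t+j))"
proof (induction j)
  case 0 then show ?case by simp
next
  case (Suc j)
  have "measure_pmf.expectation (W t) (Psi T t) \<le> measure_pmf.expectation (W (t+j)) (Psi T (t+j))"
    using Suc by simp
  also have "\<dots> \<le> measure_pmf.expectation (W (t+j)) (\<lambda>z. measure_pmf.expectation (stepW (t+j) z) (Psi T (Suc (t+j))))"
    using Suc.prems by (intro exp_mono_fin[OF W_fin] Psi_step) auto
  also have "\<dots> = measure_pmf.expectation (W (t + Suc j)) (Psi T (t + Suc j))"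
    using exp_W_Suc[of "t+j" "Psi T (Suc (t+j))"] by simp
  finally show ?case .
qed

definition Psi' :: "nat \<Rightarrow> obs option \<Rightarrow> real" where
  "Psi' t z = (case z of Some (Pos s) \<Rightarrow> if s \<le> \<tau> - 1 then ReachD t (\<tau> - 1 - s) else 0 | _ \<Rightarrow> 0)"

lemma exp_None: "measure_pmf.expectation p (\<lambda>z. if z = None then 1 else 0 :: real) = pmf p None"
  by (subst integral_measure_pmf_real[of "{None}"]) (auto split: if_splits)

lemma exp_add_fin:
  assumes "finite (set_pmf p)"
  shows "measure_pmf.expectation p (\<lambda>x. f x + g x) = measure_pmf.expectation p f + measure_pmf.expectation p (g :: _ \<Rightarrow> real)"
  using assms by (intro Bochner_Integration.integral_add) (auto simp: integrable_measure_pmf_finite)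

lemma delta_bound:
  "pmf (W t) None + measure_pmf.expectation (W t) (Psi' t) \<le> pmf (W (t + \<tau>)) None"
proof -
  have "Psi (t + \<tau>) t = (\<lambda>z. (if z = None then 1 else 0) + Psi' t z)"
    unfolding Psi_def Psi'_def by (auto split: option.split obs.split)
  then have "measure_pmf.expectation (W t) (Psi (t + \<tau>) t) = pmf (W t) None + measure_pmf.expectation (W t) (Psi' t)"
    using exp_add_fin[OF W_fin, of t "\<lambda>z. if z = None then 1 else 0" "Psi' t"] exp_None by simp
  moreover have "Psi (t + \<tau>) (t + \<tau>) = (\<lambda>z. if z = None then 1 else 0)"
    unfolding Psi_def using tau by (intro ext) (auto split: option.split obs.split)
  then have "measure_pmf.expectation (W (t + \<tau>)) (Psi (t + \<tau>) (t + \<tau>)) = pmf (W (t + \<tau>)) None"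
    using exp_None by simp
  moreover have "measure_pmf.expectation (W t) (Psi (t + \<tau>) t) \<le> measure_pmf.expectation (W (t + \<tau>)) (Psi (t + \<tau>) (t + \<tau>))"
    by (rule Psi_mono) simp
  ultimately show ?thesis by simp
qed

definition Fr :: "nat \<Rightarrow> obs option \<Rightarrow> real" where
  "Fr t z = (case z of Some ob \<Rightarrow> Rg t (st ob) | None \<Rightarrow> 0)"

lemma Fr_sq: "z \<in> set_pmf (W t) \<Longrightarrow> (Fr t z)\<^sup>2 \<le> Psi' t z / 8"
proof -
  assume z: "z \<in> set_pmf (W t)"
  show ?thesis
  proof (cases z)
    case None then show ?thesis by (simp add: Fr_def Psi'_def)
  next
    case (Some ob)
    then obtain s where s: "ob = Pos s" using W_supp[OF z] by auto
    show ?thesis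
    proof (cases "s \<le> \<tau> - 1")
      case True
      then show ?thesis using reach_bound[of "\<tau> - 1 - s"] z Some s by (auto simp: Fr_def Psi'_def st_def)
    next
      case False
      then show ?thesis using Rg_late[of s t] Some s by (simp add: Fr_def Psi'_def st_def)
    qed
  qed
qed

lemma jensen_fin:
  assumes "finite (set_pmf p)"
  shows "(measure_pmf.expectation p f)\<^sup>2 \<le> measure_pmf.expectation p (\<lambda>x. (f x)\<^sup>2 :: real)"
proof -
  have "0 \<le> measure_pmf.variance p f" by (rule measure_pmf.variance_positive)
  also have "measure_pmf.variance p f = measure_pmf.expectation p (\<lambda>x. (f x)\<^sup>2) - (measure_pmf.expectation p f)\<^sup>2"
    using assms by (intro measure_pmf.variance_eq) (auto simp: integrable_measure_pmf_finite)
  finally show ?thesis by simp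
qed

lemma Fr_bound: "(measure_pmf.expectation (W t) (Fr t))\<^sup>2 \<le> (pmf (W (t + \<tau>)) None - pmf (W t) None) / 8"
proof -
  have "(measure_pmf.expectation (W t) (Fr t))\<^sup>2 \<le> measure_pmf.expectation (W t) (\<lambda>z. (Fr t z)\<^sup>2)"
    by (rule jensen_fin[OF W_fin])
  also have "\<dots> \<le> measure_pmf.expectation (W t) (\<lambda>z. Psi' t z / 8)"
    by (intro exp_mono_fin[OF W_fin] Fr_sq)
  also have "\<dots> = measure_pmf.expectation (W t) (Psi' t) / 8" by simp
  also have "\<dots> \<le> (pmf (W (t + \<tau>)) None - pmf (W t) None) / 8" using delta_bound[of t] by simp
  finally show ?thesis .
qed

end


lemma exp_cong_supp:
  "(\<And>x. x \<in> set_pmf p \<Longrightarrow> f x = g x) \<Longrightarrow> measure_pmf.expectation p f = measure_pmf.expectation p (g :: _ \<Rightarrow> real)"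
  by (intro integral_cong_AE) (auto simp: AE_measure_pmf_iff)

context envl begin

lemma sel_act_proc: "(v, ob, p) \<in> set_pmf (proc \<tau> sel t) \<Longrightarrow> action_dist (sel t (st ob, p))"
proof -
  assume "(v, ob, p) \<in> set_pmf (proc \<tau> sel t)"
  then have "(st ob, p) \<in> snd ` set_pmf (agent_joint \<tau> sel t)" unfolding agent_joint_def by force
  then show ?thesis using ids_at by blast
qed

definition Gx :: "nat \<Rightarrow> real \<times> obs \<times> real option \<Rightarrow> real" where
  "Gx t x = (case x of (v, ob, p) \<Rightarrow> measure_pmf.expectation (sel t (st ob, p)) (\<lambda>a. Vstar \<tau> r v (st ob) - Qstar \<tau> r v (st ob) a))"

definition Gw :: "nat \<Rightarrow> real \<Rightarrow> obs option \<Rightarrow> real" where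
  "Gw t v z = (case z of None \<Rightarrow> 0 | Some ob \<Rightarrow> measure_pmf.expectation (sel t (st ob, None)) (\<lambda>a. Vstar \<tau> r v (st ob) - Qstar \<tau> r v (st ob) a))"

lemma S1: "exp_regret \<tau> r sel t = measure_pmf.expectation (proc \<tau> sel t) (Gx t)"
proof -
  have "exp_regret \<tau> r sel t = measure_pmf.expectation (proc \<tau> sel t)
     (\<lambda>x. measure_pmf.expectation ((\<lambda>(v, ob, p). map_pmf (\<lambda>a. (v, st ob, a)) (sel t (st ob, p))) x)
          (\<lambda>(v, s, a). Vstar \<tau> r v s - Qstar \<tau> r v s a))"
    unfolding exp_regret_def
  proof (rule exp_bind_fin[OF proc_fin])
    fix x assume "x \<in> set_pmf (proc \<tau> sel t)"
    then show "finite (set_pmf ((\<lambda>(v, ob, p). map_pmf (\<lambda>a. (v, st ob, a)) (sel t (st ob, p))) x))"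
      using sel_act_proc act_fin by (auto split: prod.splits)
  qed
  also have "\<dots> = measure_pmf.expectation (proc \<tau> sel t) (Gx t)"
    unfolding Gx_def by (intro exp_cong_supp) (auto split: prod.splits)
  finally show ?thesis .
qed

lemma S2: "measure_pmf.expectation (proc \<tau> sel t) (Gx t)
   = (measure_pmf.expectation (Kp t 0) (Gx t) + measure_pmf.expectation (Kp t 1) (Gx t)) / 2"
proof -
  have "measure_pmf.expectation (proc \<tau> sel t) (Gx t) = measure_pmf.expectation U (\<lambda>v. measure_pmf.expectation (Kp t v) (Gx t))"
    unfolding proc_Kp by (rule exp_bind_fin) (auto intro: Kp_fin)
  then show ?thesis by (simp add: expU)
qed

lemma S3: "v \<in> {0,1} \<Longrightarrow> measure_pmf.expectation (Kp t v) (Gx t) = measure_pmf.expectation (W t) (Gw t v)"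
proof -
  assume v: "v \<in> {0,1}"
  have "measure_pmf.expectation (Kp t v) (Gx t) = measure_pmf.expectation (Kp t v) (\<lambda>x. Gw t v (proj x))"
  proof (rule exp_cong_supp)
    fix x assume x: "x \<in> set_pmf (Kp t v)"
    obtain v' ob p where xx: "x = (v', ob, p)" by (cases x) auto
    have g: "good v x" using Kp_good[OF v x] .
    show "Gx t x = Gw t v (proj x)"
    proof (cases "p = None")
      case True then show ?thesis using g xx by (simp add: Gx_def Gw_def proj_def good_def)
    next
      case False
      then have p: "p = Some v" "v' = v" using g xx by (auto simp: good_def)
      have "(st ob, Some v) \<in> snd ` set_pmf (agent_joint \<tau> sel t)" using reach_Kp[OF v] x xx p by simp
      then have "Gx t x = 0" using informed_zero xx p by (simp add: Gx_def)
      then show ?thesis using xx p by (simp add: Gw_def proj_def)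
    qed
  qed
  also have "\<dots> = measure_pmf.expectation (map_pmf proj (Kp t v)) (Gw t v)" by simp
  also have "\<dots> = measure_pmf.expectation (W t) (Gw t v)" using W_rel[OF v] by simp
  finally show ?thesis .
qed

lemma S4: "(measure_pmf.expectation (W t) (Gw t 0) + measure_pmf.expectation (W t) (Gw t 1)) / 2
   = measure_pmf.expectation (W t) (Fr t)"
proof -
  have "(measure_pmf.expectation (W t) (Gw t 0) + measure_pmf.expectation (W t) (Gw t 1)) / 2
      = measure_pmf.expectation (W t) (\<lambda>z. (Gw t 0 z + Gw t 1 z) / 2)"
    using exp_add_fin[OF W_fin, of t "Gw t 0" "Gw t 1"] by simp
  also have "\<dots> = measure_pmf.expectation (W t) (Fr t)"
  proof (rule exp_cong_supp)
    fix z assume z: "z \<in> set_pmf (W t)"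
    show "(Gw t 0 z + Gw t 1 z) / 2 = Fr t z"
    proof (cases z)
      case None then show ?thesis by (simp add: Gw_def Fr_def)
    next
      case (Some ob)
      have act: "action_dist (sel t (st ob, None))" using sel_act_W z Some by simp
      define s where "s = st ob"
      define q where "q = pmf (sel t (s, None)) 1"
      have act': "action_dist (sel t (s, None))" using act s_def by simp
      have e0: "measure_pmf.expectation (sel t (s, None)) (\<lambda>a. Vstar \<tau> r 0 s - Qstar \<tau> r 0 s a)
          = (1 - q) * (Vstar \<tau> r 0 s - Qstar \<tau> r 0 s 0) + q * (Vstar \<tau> r 0 s - Qstar \<tau> r 0 s 1)"
        using exp_act[OF act'] q_def by simp
      have e1: "measure_pmf.expectation (sel t (s, None)) (\<lambda>a. Vstar \<tau> r 1 s - Qstar \<tau> r 1 s a)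
          = (1 - q) * (Vstar \<tau> r 1 s - Qstar \<tau> r 1 s 0) + q * (Vstar \<tau> r 1 s - Qstar \<tau> r 1 s 1)"
        using exp_act[OF act'] q_def by simp
      have e2: "Rg t s = ((1 - q) * (Vstar \<tau> r 0 s - Qstar \<tau> r 0 s 0) + q * (Vstar \<tau> r 0 s - Qstar \<tau> r 0 s 1)
          + (1 - q) * (Vstar \<tau> r 1 s - Qstar \<tau> r 1 s 0) + q * (Vstar \<tau> r 1 s - Qstar \<tau> r 1 s 1)) / 2"
        unfolding Rg_def using exp_pairU[OF act', of "\<lambda>(v, a). Vstar \<tau> r v s - Qstar \<tau> r v s a"] q_def by simp
      show ?thesis using e0 e1 e2 unfolding Some Gw_def Fr_def s_def by simp
    qed
  qed
  finally show ?thesis .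
qed

lemma exp_regret_W: "exp_regret \<tau> r sel t = measure_pmf.expectation (W t) (Fr t)"
proof -
  have "exp_regret \<tau> r sel t = (measure_pmf.expectation (Kp t 0) (Gx t) + measure_pmf.expectation (Kp t 1) (Gx t)) / 2"
    using S1 S2 by simp
  also have "\<dots> = (measure_pmf.expectation (W t) (Gw t 0) + measure_pmf.expectation (W t) (Gw t 1)) / 2"
    using S3[of 0 t] S3[of 1 t] by simp
  also have "\<dots> = measure_pmf.expectation (W t) (Fr t)" by (rule S4)
  finally show ?thesis .
qed

lemma J2: "map_pmf (\<lambda>(v, ob, p). (v, p)) (proc \<tau> sel t)
   = bind_pmf U (\<lambda>v. map_pmf (\<lambda>z. (v, if z = None then Some v else None)) (W t))"
proof -
  have "map_pmf (\<lambda>(v, ob, p). (v, p)) (proc \<tau> sel t) = bind_pmf U (\<lambda>v. map_pmf (\<lambda>(v, ob, p). (v, p)) (Kp t v))"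
    unfolding proc_Kp by (simp add: map_bind_pmf)
  also have "\<dots> = bind_pmf U (\<lambda>v. map_pmf (\<lambda>z. (v, if z = None then Some v else None)) (W t))"
  proof (rule bind_pmf_cong[OF refl])
    fix v assume "v \<in> set_pmf U"
    then have v: "v \<in> {0,1}" by simp
    have "map_pmf (\<lambda>(v, ob, p). (v, p)) (Kp t v) = map_pmf (\<lambda>x. (v, if proj x = None then Some v else None)) (Kp t v)"
    proof (rule map_pmf_cong[OF refl])
      fix x assume "x \<in> set_pmf (Kp t v)"
      then have "good v x" using Kp_good v by blast
      then show "(case x of (v, ob, p) \<Rightarrow> (v, p)) = (v, if proj x = None then Some v else None)"
        by (auto simp: good_def proj_def split: prod.splits)
    qed
    also have "\<dots> = map_pmf (\<lambda>z. (v, if z = None then Some v else None)) (W t)"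
      unfolding W_rel[OF v, of t, symmetric] by (simp only: map_pmf_comp)
    finally show "map_pmf (\<lambda>(v, ob, p). (v, p)) (Kp t v) = map_pmf (\<lambda>z. (v, if z = None then Some v else None)) (W t)" .
  qed
  finally show ?thesis .
qed

lemma pistar_ne: "pistar \<tau> r 0 \<noteq> pistar \<tau> r 1"
proof -
  have s: "\<tau> - 2 \<le> \<tau> - 2" by simp
  have "Mx \<tau> r (\<tau> - 2 + 1) = 0" using tau by (intro Mx_last) simp
  then have rec: "Mx \<tau> r (\<tau> - 2 + 1) \<le> r (\<tau> - 2)" using xy_bounds[OF s] by simp
  have "pistar \<tau> r 0 (\<tau> - 2) \<noteq> pistar \<tau> r 1 (\<tau> - 2)" using pistar_rec[OF s rec] by simp
  then show ?thesis by metis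
qed

lemma pmf_ind_map:
  "pmf (map_pmf (\<lambda>z. if z = None then Some v else None) (M :: obs option pmf)) y
     = (if y = Some v then pmf M None else if y = None then 1 - pmf M None else 0)"
proof -
  have P: "pmf (map_pmf (\<lambda>z. if z = None then Some v else None) M) y
      = measure_pmf.prob M ((\<lambda>z. if z = None then Some v else None) -` {y})" by (rule pmf_map)
  show ?thesis
  proof (cases "y = Some v")
    case True
    then have pre: "(\<lambda>z. if z = None then Some v else None) -` {y} = {None}" by (auto split: if_splits)
    show ?thesis unfolding P pre using True by (simp add: measure_pmf_single)
  next
    case F: False
    show ?thesis
    proof (cases "y = None")
      case True
      then have pre: "(\<lambda>z. if z = None then Some v else None) -` {y} = UNIV - {None}" by auto
      have m: "measure_pmf.prob M (UNIV - {None}) = 1 - pmf M None"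
        using measure_pmf.prob_compl[of "{None}" M] by (simp add: measure_pmf_single)
      show ?thesis unfolding P pre m using True F by simp
    next
      case False
      then have pre: "(\<lambda>z. if z = None then Some v else None) -` {y} = {}" using F by (auto split: if_splits)
      have "(if y = Some v then pmf M None else if y = None then 1 - pmf M None else 0) = 0" by (simp only: if_not_P[OF F] if_not_P[OF False])
      then show ?thesis unfolding P pre by simp
    qed
  qed
qed

end


context envl begin

lemma cond_ent_W: "cond_ent_pistar \<tau> r sel t = 1 - pmf (W t) None"
proof -
  define w where "w = pmf (W t) None"
  have w01: "0 \<le> w" "w \<le> 1" unfolding w_def by (auto simp: pmf_le_1)
  define JJ where "JJ = bind_pmf U (\<lambda>v. map_pmf (\<lambda>z. (v, if z = None then Some v else None)) (W t))"
  have e1: "map_pmf (\<lambda>(v, ob, p). (pistar \<tau> r v, p)) (proc \<tau> sel t) = map_pmf (\<lambda>(v, p). (pistar \<tau> r v, p)) JJ"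
    unfolding JJ_def J2[symmetric] map_pmf_comp by (intro map_pmf_cong) (auto split: prod.splits)
  have e2: "map_pmf (\<lambda>(v, ob, p). p) (proc \<tau> sel t) = map_pmf snd JJ"
    unfolding JJ_def J2[symmetric] map_pmf_comp by (intro map_pmf_cong) (auto split: prod.splits)
  have setJ: "set_pmf JJ \<subseteq> {(0,None),(1,None),(0,Some 0),(1,Some 1)}" unfolding JJ_def by (auto split: if_splits)
  have inj: "inj_on (\<lambda>(v, p). (pistar \<tau> r v, p)) (set_pmf JJ)"
  proof (rule inj_onI)
    fix a b assume a: "a \<in> set_pmf JJ" and b: "b \<in> set_pmf JJ" and eq: "(case a of (v, p) \<Rightarrow> (pistar \<tau> r v, p)) = (case b of (v, p) \<Rightarrow> (pistar \<tau> r v, p))"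
    have "fst a \<in> {0,1}" "fst b \<in> {0,1}" using a b setJ by auto
    then show "a = b" using eq pistar_ne by (cases a, cases b) auto
  qed
  have pJ: "pmf JJ (v, y) = ((if 0 = v then pmf (map_pmf (\<lambda>z. if z = None then Some 0 else None) (W t)) y else 0)
             + (if 1 = v then pmf (map_pmf (\<lambda>z. if z = None then Some 1 else None) (W t)) y else 0)) / 2" for v y
    unfolding JJ_def pmf_bindU pmf_pair_map by simp
  have q1: "pmf JJ (0, None) = (1 - w)/2" unfolding pJ pmf_ind_map w_def by simp
  have q2: "pmf JJ (1, None) = (1 - w)/2" unfolding pJ pmf_ind_map w_def by simp
  have q3: "pmf JJ (0, Some 0) = w/2" unfolding pJ pmf_ind_map w_def by simp
  have q4: "pmf JJ (1, Some 1) = w/2" unfolding pJ pmf_ind_map w_def by simp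
  have HJ: "entropy2 JJ = - ((1 - w) * log 2 ((1 - w)/2) + w * log 2 (w/2))"
  proof -
    have "entropy2 JJ = - (\<Sum>z\<in>{(0,None),(1,None),(0,Some 0),(1,Some 1)}. pmf JJ z * log 2 (pmf JJ z))"
      using setJ by (intro entropy2_sum) auto
    also have "\<dots> = - (2 * ((1 - w)/2 * log 2 ((1 - w)/2)) + 2 * (w/2 * log 2 (w/2)))"
      by (simp add: q1 q2 q3 q4)
    finally show ?thesis by simp
  qed
  have sndJ: "map_pmf snd JJ = bind_pmf U (\<lambda>v. map_pmf (\<lambda>z. if z = None then Some v else None) (W t))"
    unfolding JJ_def by (simp add: map_bind_pmf map_pmf_comp)
  have r1: "pmf (map_pmf snd JJ) None = 1 - w" unfolding sndJ pmf_bindU pmf_ind_map w_def by simp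
  have r2: "pmf (map_pmf snd JJ) (Some 0) = w/2" unfolding sndJ pmf_bindU pmf_ind_map w_def by simp
  have r3: "pmf (map_pmf snd JJ) (Some 1) = w/2" unfolding sndJ pmf_bindU pmf_ind_map w_def by simp
  have Hs: "entropy2 (map_pmf snd JJ) = - ((1 - w) * log 2 (1 - w) + w * log 2 (w/2))"
  proof -
    have "entropy2 (map_pmf snd JJ) = - (\<Sum>z\<in>{None, Some 0, Some 1}. pmf (map_pmf snd JJ) z * log 2 (pmf (map_pmf snd JJ) z))"
      unfolding sndJ by (intro entropy2_sum) auto
    also have "\<dots> = - ((1 - w) * log 2 (1 - w) + 2 * (w/2 * log 2 (w/2)))"
      by (simp add: r1 r2 r3)
    finally show ?thesis by simp
  qed
  have "cond_ent_pistar \<tau> r sel t = entropy2 JJ - entropy2 (map_pmf snd JJ)"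
    unfolding cond_ent_pistar_def e1 e2 entropy2_map_inj[OF inj] ..
  also have "\<dots> = 1 - w" unfolding HJ Hs using xlog[of "1 - w"] w01 by simp
  finally show ?thesis unfolding w_def .
qed

end


lemma telesc:
  fixes w :: "nat \<Rightarrow> real"
  shows "(\<Sum>t<T. w (t + k) - w t) = (\<Sum>j<k. w (T + j) - w j)"
proof (induction T)
  case 0 then show ?case by simp
next
  case (Suc T)
  have tel: "(\<Sum>j<k. w (Suc T + j) - w (T + j)) = w (T + k) - w T"
    using sum_lessThan_telescope[of "\<lambda>j. w (T + j)" k] by simp
  have "(\<Sum>j<k. w (Suc T + j) - w j) = (\<Sum>j<k. w (T + j) - w j) + (\<Sum>j<k. w (Suc T + j) - w (T + j))"
    by (simp add: sum.distrib[symmetric])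
  then show ?case using Suc tel by simp
qed

lemma sum_sqrt_bound:
  fixes d :: "nat \<Rightarrow> real"
  assumes "\<And>t. 0 \<le> d t"
  shows "(\<Sum>t<T. sqrt (d t)) \<le> sqrt (real T * (\<Sum>t<T. d t))"
proof -
  have "(\<Sum>t<T. 1 * sqrt (d t))\<^sup>2 \<le> (\<Sum>t<T. 1\<^sup>2) * (\<Sum>t<T. (sqrt (d t))\<^sup>2)"
    by (rule Cauchy_Schwarz_ineq_sum)
  also have "\<dots> = real T * (\<Sum>t<T. d t)" using assms by simp
  finally show ?thesis by (intro real_le_rsqrt) simp
qed

theorem mainTheorem11:
  fixes \<tau> :: nat and r :: "nat \<Rightarrow> real"
    and sel :: "nat \<Rightarrow> nat \<times> real option \<Rightarrow> nat pmf"
  assumes "\<tau> \<ge> 2"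
    and "\<forall>k < \<tau> - 1. 0 \<le> r k \<and> r k < 1"
    and "is_value_ids \<tau> r sel"
  shows "(\<forall>t. Gamma_tau \<tau> r sel t \<le> ereal (real \<tau> / 8))
         \<and> (\<forall>T. regret \<tau> r sel T \<le> 1/2 * sqrt (real \<tau> / 2 * real T))"
proof -
  interpret envl \<tau> r sel using assms by unfold_locales
  define w where "w t = pmf (W t) None" for t
  define d where "d t = w (t + \<tau>) - w t" for t
  have Eb: "(exp_regret \<tau> r sel t)\<^sup>2 \<le> d t / 8" for t
    using Fr_bound[of t] exp_regret_W[of t] unfolding d_def w_def by simp
  have d0: "0 \<le> d t" for t
  proof -
    have "0 \<le> (exp_regret \<tau> r sel t)\<^sup>2" by simp
    then show ?thesis using Eb[of t] by linarith
  qed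
  have ce: "cond_ent_pistar \<tau> r sel t - cond_ent_pistar \<tau> r sel (t + \<tau>) = d t" for t
    unfolding cond_ent_W d_def w_def by simp
  have tau0: "real \<tau> > 0" using assms(1) by simp
  have G: "Gamma_tau \<tau> r sel t \<le> ereal (real \<tau> / 8)" for t
  proof (cases "d t = 0")
    case True
    moreover have "0 \<le> (exp_regret \<tau> r sel t)\<^sup>2" by simp
    ultimately have "(exp_regret \<tau> r sel t)\<^sup>2 = 0" using Eb[of t] by linarith
    then show ?thesis unfolding Gamma_tau_def ce using tau0 by (simp add: ratio_e_def)
  next
    case False
    then have dp: "d t > 0" using d0[of t] by simp
    have "(exp_regret \<tau> r sel t)\<^sup>2 / (d t / real \<tau>) = (exp_regret \<tau> r sel t)\<^sup>2 * real \<tau> / d t"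
      by simp
    also have "\<dots> \<le> (d t / 8) * real \<tau> / d t"
      using Eb[of t] tau0 dp by (intro divide_right_mono mult_right_mono) auto
    also have "\<dots> = real \<tau> / 8" using dp by simp
    finally show ?thesis unfolding Gamma_tau_def ce ratio_e_def using dp tau0 by simp
  qed
  have w01: "0 \<le> w t" "w t \<le> 1" for t unfolding w_def by (auto simp: pmf_le_1)
  have R: "regret \<tau> r sel T \<le> 1/2 * sqrt (real \<tau> / 2 * real T)" for T
  proof -
    have e1: "exp_regret \<tau> r sel t \<le> sqrt (d t / 8)" for t
    proof -
      have "exp_regret \<tau> r sel t \<le> sqrt ((exp_regret \<tau> r sel t)\<^sup>2)" by simp
      also have "\<dots> \<le> sqrt (d t / 8)" using Eb[of t] by (rule real_sqrt_le_mono)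
      finally show ?thesis .
    qed
    have "regret \<tau> r sel T \<le> (\<Sum>t<T. sqrt (d t / 8))"
      unfolding regret_def by (intro sum_mono e1)
    also have "\<dots> \<le> sqrt (real T * (\<Sum>t<T. d t / 8))"
      using d0 by (intro sum_sqrt_bound) simp
    also have "(\<Sum>t<T. d t / 8) \<le> real \<tau> / 8"
    proof -
      have "(\<Sum>t<T. d t) = (\<Sum>j<\<tau>. w (T + j) - w j)" unfolding d_def by (rule telesc)
      also have "\<dots> \<le> (\<Sum>j<\<tau>. 1)"
      proof (rule sum_mono)
        fix j show "w (T + j) - w j \<le> 1" using w01[of "T+j"] w01[of j] by linarith
      qed
      finally have "(\<Sum>t<T. d t) \<le> real \<tau>" by simp
      then show ?thesis by (simp add: sum_divide_distrib[symmetric])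
    qed
    then have "sqrt (real T * (\<Sum>t<T. d t / 8)) \<le> sqrt (real T * (real \<tau> / 8))"
      by (intro real_sqrt_le_mono mult_left_mono) auto
    also have "\<dots> = 1/2 * sqrt (real \<tau> / 2 * real T)"
    proof -
      have a: "real T * (real \<tau> / 8) = (real \<tau> / 2 * real T) / 4" by simp
      have b: "sqrt 4 = (2::real)" by (rule real_sqrt_unique) auto
      have "sqrt (real T * (real \<tau> / 8)) = sqrt (real \<tau> / 2 * real T) / sqrt 4"
        unfolding a by (rule real_sqrt_divide)
      then show ?thesis unfolding b by simp
    qed
    finally show ?thesis by simp
  qed
  show ?thesis using G R by simp
qed


end
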